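(* There exists exactly one Markov transition kernel $\mu$ on $[0,\infty)$ with $\mu(0,\{0\})=1$ and $\mu(t,[0,t))=1$ for every $t>0$ (absorbing state $0$ and strictly decreasing paths) such that, for every $t>0$, the chain $(X_n)_{n\ge0}$ with $X_0=t$ satisfies $$P\big(\#\{n\ge1: X_n\in(0,t)\}=j\big)=q_j(t)\qquad\text{for all } j\ge0.$$
   Context: $\sigma_1(k,j)$ are the unsigned Stirling numbers of the first kind ($\sigma_1(k,j)=0$ for $k<j$, $\sigma_1(0,0)=1$); $p_j(t)=e^{-t}\sum_{k=j}^\infty \frac{t^k}{k!}\frac{\sigma_1(k,j)}{k!}$; and $q_j(t)=\frac1t\int_0^t p_j(u)\,du$ for $t>0$, equivalently $q_j(t)=e^{-t}\sum_{k=0}^\infty\frac{t^k}{(k+1)!}\sum_{i=0}^k\frac{\sigma_1(i,j)}{i!}$ (a probability distribution in $j\ge0$). *)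

theory Defs
  imports "HOL-Probability.Probability" "HOL-Combinatorics.Stirling"
begin

definition p_fun :: "nat \<Rightarrow> real \<Rightarrow> real" where
  "p_fun j t = exp (- t) * (\<Sum>k. t ^ k / fact k * (real (stirling k j) / fact k))"

definition q_fun :: "nat \<Rightarrow> real \<Rightarrow> real" where
  "q_fun j t = (1 / t) * integral {0..t} (p_fun j)"

definition S :: "real measure" where
  "S = restrict_space borel {0..}"

definition markov_kernel :: "(real \<Rightarrow> real measure) \<Rightarrow> bool" where
  "markov_kernel \<mu> \<longleftrightarrow> \<mu> \<in> S \<rightarrow>\<^sub>M prob_algebra S"

primrec fdd :: "(real \<Rightarrow> real measure) \<Rightarrow> real \<Rightarrow> nat \<Rightarrow> (nat \<Rightarrow> real) measure" where
  "fdd \<mu> t 0 = return (\<Pi>\<^sub>M i\<in>{..0}. S) (\<lambda>i\<in>{..0}. t)"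
| "fdd \<mu> t (Suc n) = fdd \<mu> t n \<bind>
     (\<lambda>x. distr (\<mu> (x n)) (\<Pi>\<^sub>M i\<in>{..Suc n}. S)
                 (\<lambda>y. \<lambda>i\<in>{..Suc n}. if i = Suc n then y else x i))"

definition chain_law :: "(real \<Rightarrow> real measure) \<Rightarrow> real \<Rightarrow> real stream measure \<Rightarrow> bool" where
  "chain_law \<mu> t P \<longleftrightarrow> prob_space P \<and> sets P = sets (stream_space S) \<and>
     (\<forall>n. distr P (\<Pi>\<^sub>M i\<in>{..n}. S) (\<lambda>\<omega>. \<lambda>i\<in>{..n}. \<omega> !! i) = fdd \<mu> t n)"

definition visits_eq :: "real \<Rightarrow> nat \<Rightarrow> real stream set" where
  "visits_eq t j = {\<omega> \<in> streams {0..}.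
      finite {n. n \<ge> 1 \<and> \<omega> !! n \<in> {0<..<t}} \<and> card {n. n \<ge> 1 \<and> \<omega> !! n \<in> {0<..<t}} = j}"

end

theory Submission
  imports Defs
begin

definition cf :: "nat \<Rightarrow> nat \<Rightarrow> real" where
  "cf j k = real (stirling k j) / (fact k)^2"

definition PP :: "nat \<Rightarrow> real \<Rightarrow> real" where
  "PP j v = (\<Sum>k. cf j k * v^k)"

lemma stirling_le_fact: "stirling k j \<le> fact k"
proof (cases "j \<le> k")
  case True
  have "stirling k j \<le> (\<Sum>i\<le>k. stirling k i)"
    by (rule member_le_sum) (use True in auto)
  then show ?thesis by (simp add: sum_stirling)
qed simp

lemma cf_nonneg: "cf j k \<ge> 0" by (simp add: cf_def)

lemma cf_le: "cf j k \<le> 1 / fact k"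
proof -
  have "real (stirling k j) \<le> fact k"
    using stirling_le_fact[of k j] by (metis of_nat_fact of_nat_le_iff)
  then have "real (stirling k j) / (fact k)^2 \<le> fact k / (fact k)^2"
    by (intro divide_right_mono) auto
  also have "\<dots> = 1 / fact k" by (simp add: power2_eq_square)
  finally show ?thesis by (simp add: cf_def)
qed

lemma summable_cf: "summable (\<lambda>k. cf j k * v^k)"
proof (rule summable_comparison_test')
  show "summable (\<lambda>n. inverse (fact n) * \<bar>v\<bar> ^ n)" by (rule summable_exp)
  fix n
  have "norm (cf j n * v^n) = cf j n * \<bar>v\<bar>^n" by (simp add: cf_nonneg abs_mult power_abs)
  also have "\<dots> \<le> (1 / fact n) * \<bar>v\<bar>^n" by (intro mult_right_mono cf_le) auto
  finally show "norm (cf j n * v^n) \<le> inverse (fact n) * \<bar>v\<bar> ^ n" by (simp add: divide_inverse)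
qed

lemma p_fun_eq: "p_fun j t = exp (- t) * PP j t"
  unfolding p_fun_def PP_def cf_def
  by (simp add: power2_eq_square field_simps)

lemma PP_deriv: "(PP j has_field_derivative (\<Sum>n. diffs (cf j) n * v^n)) (at v)"
  unfolding PP_def[abs_def] by (rule termdiffs_strong_converges_everywhere) (rule summable_cf)

lemma PP_cont: "isCont (PP j) v"
  unfolding PP_def[abs_def] by (rule isCont_powser_converges_everywhere) (rule summable_cf)

lemma PP_0: "PP (Suc j) 0 = 0"
  unfolding PP_def using powser_zero[of "cf (Suc j)"] by (simp add: cf_def)

lemma summable_ncf: "summable (\<lambda>n. (of_nat n * cf j n) * y^n)"
proof -
  have "summable (\<lambda>n. diffs (cf j) n * y^n)"
    by (rule termdiff_converges_all) (rule summable_cf)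
  then have "summable (\<lambda>n. y * (diffs (cf j) n * y^n))" by (rule summable_mult)
  then have "summable (\<lambda>n. (of_nat (Suc n) * cf j (Suc n)) * y^(Suc n))"
    by (simp add: diffs_def algebra_simps)
  then show ?thesis by (subst summable_Suc_iff[symmetric])
qed

definition CC :: "nat \<Rightarrow> real \<Rightarrow> real" where
  "CC j v = (\<Sum>n. (of_nat n * cf j n) * v^n)"

lemma diffs_ncf: "diffs (\<lambda>n. of_nat n * cf (Suc j) n) n = of_nat n * cf (Suc j) n + cf j n"
proof -
  have f: "fact (Suc n) = real (Suc n) * fact n" by simp
  have "diffs (\<lambda>n. of_nat n * cf (Suc j) n) n
      = real (Suc n) * real (Suc n) * (real (stirling (Suc n) (Suc j)) / (fact (Suc n))^2)"
    by (simp add: diffs_def cf_def)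
  also have "\<dots> = real (stirling (Suc n) (Suc j)) / (fact n)^2"
    proof -
    have g: "\<And>s a b::real. a \<noteq> 0 \<Longrightarrow> b \<noteq> 0 \<Longrightarrow> a*a*(s/(a*b)^2) = s/b^2"
      by (simp add: field_simps power2_eq_square)
    show ?thesis unfolding f by (rule g) auto
  qed
  also have "\<dots> = (real n * real (stirling n (Suc j)) + real (stirling n j)) / (fact n)^2"
    by (simp only: stirling.simps(4) of_nat_add of_nat_mult)
  also have "\<dots> = of_nat n * cf (Suc j) n + cf j n"
    by (simp add: cf_def add_divide_distrib)
  finally show ?thesis .
qed

lemma CC_deriv: "(CC (Suc j) has_field_derivative (CC (Suc j) v + PP j v)) (at v)"
proof -
  have "(CC (Suc j) has_field_derivative (\<Sum>n. diffs (\<lambda>n. of_nat n * cf (Suc j) n) n * v^n)) (at v)"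
    unfolding CC_def[abs_def] by (rule termdiffs_strong_converges_everywhere) (rule summable_ncf)
  also have "(\<Sum>n. diffs (\<lambda>n. of_nat n * cf (Suc j) n) n * v^n)
      = (\<Sum>n. (of_nat n * cf (Suc j) n) * v^n + cf j n * v^n)"
    by (simp add: diffs_ncf algebra_simps)
  also have "\<dots> = CC (Suc j) v + PP j v"
    unfolding CC_def PP_def by (rule suminf_add[symmetric]) (auto intro: summable_ncf summable_cf)
  finally show ?thesis .
qed

lemma CC_eq: "CC j v = v * (\<Sum>n. diffs (cf j) n * v^n)"
proof -
  have s: "summable (\<lambda>n. diffs (cf j) n * v^n)"
    by (rule termdiff_converges_all) (rule summable_cf)
  have "(\<lambda>n. v * (diffs (cf j) n * v^n)) sums (v * (\<Sum>n. diffs (cf j) n * v^n))"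
    by (intro sums_mult summable_sums s)
  then have "(\<lambda>n. (of_nat (Suc n) * cf j (Suc n)) * v^(Suc n)) sums (v * (\<Sum>n. diffs (cf j) n * v^n))"
    by (simp add: diffs_def algebra_simps)
  then have "(\<lambda>n. (of_nat n * cf j n) * v^n) sums (v * (\<Sum>n. diffs (cf j) n * v^n) + (of_nat 0 * cf j 0) * v^0)"
    by (subst sums_Suc_iff[symmetric])
  then show ?thesis unfolding CC_def by (simp add: sums_iff)
qed

lemma cont_expPP: "continuous_on A (\<lambda>u. exp (- u) * PP j u)"
  by (intro continuous_at_imp_continuous_on ballI continuous_intros PP_cont)

lemma CC_integral:
  assumes "v \<ge> 0"
  shows "exp (- v) * CC (Suc j) v = integral {0..v} (\<lambda>u. exp (- u) * PP j u)"
proof -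
  define R where "R v = exp (- v) * CC (Suc j) v - integral {0..v} (\<lambda>u. exp (- u) * PP j u)" for v
  have "\<exists>c. \<forall>x\<in>{0..v}. R x = c"
  proof (rule has_field_derivative_zero_constant)
    fix x assume x: "x \<in> {0..v}"
    have d1: "((\<lambda>x. exp (- x) * CC (Suc j) x) has_field_derivative
        (- exp (- x) * CC (Suc j) x + exp (- x) * (CC (Suc j) x + PP j x))) (at x within {0..v})"
      by (auto intro!: derivative_eq_intros CC_deriv[THEN has_field_derivative_at_within] simp: algebra_simps)
    have d2: "((\<lambda>u. integral {0..u} (\<lambda>u. exp (- u) * PP j u)) has_field_derivative
        (exp (- x) * PP j x)) (at x within {0..v})"
      using integral_has_vector_derivative[OF cont_expPP x]
      by (simp add: has_real_derivative_iff_has_vector_derivative)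
    show "(R has_field_derivative 0) (at x within {0..v})"
      unfolding R_def[abs_def] using DERIV_diff[OF d1 d2] by (simp add: algebra_simps)
  qed simp
  then obtain c where c: "\<And>x. x \<in> {0..v} \<Longrightarrow> R x = c" by blast
  have "R 0 = 0" unfolding R_def CC_def by (simp add: powser_zero)
  then have "R v = 0" using c[of 0] c[of v] assms by auto
  then show ?thesis unfolding R_def by simp
qed

lemma q_fun_alt:
  assumes "v > 0"
  shows "q_fun j v = integral {0..v} (\<lambda>u. exp (- u) * PP j u) / v"
  unfolding q_fun_def p_fun_eq[abs_def] by simp

lemma PP_deriv_q:
  assumes "v > 0"
  shows "(PP (Suc j) has_field_derivative (exp v * q_fun j v)) (at v)"
proof -
  have "exp (- v) * (v * (\<Sum>n. diffs (cf (Suc j)) n * v^n)) = integral {0..v} (\<lambda>u. exp (- u) * PP j u)"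
    using CC_integral[of v j] CC_eq[of "Suc j" v] assms by simp
  then have "(\<Sum>n. diffs (cf (Suc j)) n * v^n) = exp v * q_fun j v"
    using assms by (simp add: q_fun_alt exp_minus field_simps)
  then show ?thesis using PP_deriv[of "Suc j" v] by simp
qed

lemma PP_has_integral:
  assumes "v \<ge> 0"
  shows "((\<lambda>x. exp x * q_fun j x) has_integral PP (Suc j) v) {0..v}"
proof -
  have "((\<lambda>x. exp x * q_fun j x) has_integral PP (Suc j) v - PP (Suc j) 0) {0..v}"
  proof (rule fundamental_theorem_of_calculus_interior)
    show "continuous_on {0..v} (PP (Suc j))"
      by (intro continuous_at_imp_continuous_on ballI PP_cont)
    fix x assume "x \<in> {0<..<v}"
    then show "(PP (Suc j) has_vector_derivative exp x * q_fun j x) (at x)"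
      using PP_deriv_q[of x j] by (simp add: has_real_derivative_iff_has_vector_derivative)
  qed (use assms in auto)
  then show ?thesis by (simp add: PP_0)
qed

definition Um :: "real measure" where "Um = uniform_measure lborel {0..1}"
definition Em :: "real measure" where "Em = density lborel (\<lambda>x. ennreal (exponential_density 1 x))"
definition Bm :: "(real \<times> real) measure" where "Bm = Um \<Otimes>\<^sub>M Em"
definition fk :: "real \<Rightarrow> real \<times> real \<Rightarrow> real" where "fk x w = max 0 (x * fst w - \<bar>snd w\<bar>)"
definition mu :: "real \<Rightarrow> real measure" where "mu x = distr Bm S (fk x)"

lemma prob_Um: "prob_space Um"
  unfolding Um_def by (rule prob_space_uniform_measure) auto

lemma prob_Em: "prob_space Em"
  unfolding Em_def by (rule prob_space_exponential_density) simp

lemma prob_Bm: "prob_space Bm"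
  unfolding Bm_def by (intro prob_space_pair prob_Um prob_Em)

lemma sets_Um[measurable_cong]: "sets Um = sets borel" by (simp add: Um_def)
lemma sets_Em[measurable_cong]: "sets Em = sets borel" by (simp add: Em_def)
lemma sets_Bm[measurable_cong]: "sets Bm = sets (borel \<Otimes>\<^sub>M borel)"
  unfolding Bm_def by (intro sets_pair_measure_cong sets_Um sets_Em)

lemma space_S: "space S = {0..}" by (simp add: S_def)
lemma sets_S_borel: "A \<in> sets S \<Longrightarrow> A \<in> sets borel"
  unfolding S_def by (auto simp: sets_restrict_space)

lemma S_id_borel[measurable]: "(\<lambda>x. x) \<in> S \<rightarrow>\<^sub>M borel"
  unfolding S_def by (rule measurable_restrict_space1) simp

lemma fst_S_borel[measurable]: "fst \<in> S \<Otimes>\<^sub>M M \<rightarrow>\<^sub>M borel"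
  using measurable_comp[OF measurable_fst S_id_borel] by (simp add: comp_def)

lemma fk_meas[measurable]: "(\<lambda>(x, w). fk x w) \<in> S \<Otimes>\<^sub>M Bm \<rightarrow>\<^sub>M S"
proof -
  have "(\<lambda>p. max 0 (fst p * fst (snd p) - \<bar>snd (snd p)\<bar>)) \<in> S \<Otimes>\<^sub>M (borel \<Otimes>\<^sub>M borel) \<rightarrow>\<^sub>M borel"
    by measurable
  then have "(\<lambda>(x, w). fk x w) \<in> S \<Otimes>\<^sub>M (borel \<Otimes>\<^sub>M borel) \<rightarrow>\<^sub>M borel"
    by (simp add: fk_def split_beta')
  then have "(\<lambda>(x, w). fk x w) \<in> S \<Otimes>\<^sub>M Bm \<rightarrow>\<^sub>M borel"
    by (subst measurable_cong_sets[OF sets_pair_measure_cong[OF refl sets_Bm] refl])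
  then show ?thesis unfolding S_def
    by (intro measurable_restrict_space2) (auto simp: fk_def)
qed

lemma fk_meas1[measurable]: "fk x \<in> Bm \<rightarrow>\<^sub>M S"
proof -
  have "fk x \<in> (borel \<Otimes>\<^sub>M borel) \<rightarrow>\<^sub>M borel"
    unfolding fk_def by measurable
  then have "fk x \<in> Bm \<rightarrow>\<^sub>M borel"
    by (subst measurable_cong_sets[OF sets_Bm refl])
  then show ?thesis unfolding S_def
    by (intro measurable_restrict_space2) (auto simp: fk_def)
qed

lemma sets_S_iff: "A \<in> sets S \<longleftrightarrow> A \<in> sets borel \<and> A \<subseteq> {0..}"
  unfolding S_def by (auto simp: sets_restrict_space_iff)

lemma markov_mu: "markov_kernel mu"
  unfolding markov_kernel_def mu_def
proof (rule measurable_distr_prob_space2[where g="\<lambda>_. Bm"])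
  show "(\<lambda>x. Bm) \<in> S \<rightarrow>\<^sub>M prob_algebra Bm"
    by (rule measurable_const) (simp add: space_prob_algebra prob_Bm)
qed (rule fk_meas)

lemma prob_mu: "prob_space (mu x)"
  unfolding mu_def by (intro prob_space.prob_space_distr prob_Bm fk_meas1)

lemma sets_mu[simp]: "sets (mu x) = sets S" by (simp add: mu_def)

lemma mu_0: "measure (mu 0) {0} = 1"
proof -
  have "measure (mu 0) {0} = measure Bm (fk 0 -` {0} \<inter> space Bm)"
    unfolding mu_def by (rule measure_distr) (auto simp: sets_S_iff)
  also have "fk 0 -` {0} \<inter> space Bm = space Bm" by (auto simp: fk_def)
  also have "measure Bm (space Bm) = 1" using prob_Bm by (simp add: prob_space.prob_space)
  finally show ?thesis .
qed

lemma AE_Um: "AE u in Um. 0 \<le> u \<and> u < 1"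
proof -
  have "AE u in lborel. u \<noteq> 1" by (rule AE_lborel_singleton)
  then have "AE u in Um. u \<noteq> 1" unfolding Um_def
    by (intro AE_uniform_measureI) (auto elim: AE_mp)
  moreover have "AE u in Um. u \<in> {0..1}" unfolding Um_def
    by (rule AE_uniform_measureI) auto
  ultimately show ?thesis by eventually_elim auto
qed

lemma AE_Bm: "AE w in Bm. 0 \<le> fst w \<and> fst w < 1"
proof -
  interpret E: prob_space Em by (rule prob_Em)
  interpret pair_sigma_finite Um Em
    by (intro pair_sigma_finite.intro prob_space_imp_sigma_finite prob_Um prob_Em)
  show ?thesis unfolding Bm_def
    by (rule AE_pair_measure) (use AE_Um in auto)
qed

lemma mu_lt: assumes "t > 0" shows "measure (mu t) {0..<t} = 1"
proof -
  interpret B: prob_space Bm by (rule prob_Bm)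
  have "measure (mu t) {0..<t} = measure Bm (fk t -` {0..<t} \<inter> space Bm)"
    unfolding mu_def by (rule measure_distr) (auto simp: sets_S_iff)
  also have "\<dots> = 1"
  proof (rule B.prob_eq_1[THEN iffD2])
    have "{0..<t} \<in> sets S" by (auto simp: sets_S_iff)
    then show "fk t -` {0..<t} \<inter> space Bm \<in> sets Bm" by (rule measurable_sets[OF fk_meas1])
    show "AE x in Bm. x \<in> fk t -` {0..<t} \<inter> space Bm"
      using AE_Bm
    proof eventually_elim
      case (elim w)
      have "t * fst w < t" using elim assms by simp
      then have "t * fst w - \<bar>snd w\<bar> < t" by (smt (verit) abs_ge_zero)
      then show ?case using assms by (auto simp: fk_def Bm_def space_pair_measure Um_def Em_def)
    qed
  qed
  finally show ?thesis .
qed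

lemma PP_nonneg: "v \<ge> 0 \<Longrightarrow> PP j v \<ge> 0"
  unfolding PP_def by (intro suminf_nonneg summable_cf mult_nonneg_nonneg cf_nonneg) auto

lemma p_nonneg: "v \<ge> 0 \<Longrightarrow> p_fun j v \<ge> 0"
  by (simp add: p_fun_eq PP_nonneg)

lemma p_cont: "continuous_on A (p_fun j)"
  unfolding p_fun_eq[abs_def] by (rule cont_expPP)

lemma CC_cont: "isCont (CC j) v"
  unfolding CC_def[abs_def] by (rule isCont_powser_converges_everywhere) (rule summable_ncf)

lemma integral_p_CC: "v \<ge> 0 \<Longrightarrow> integral {0..v} (p_fun j) = exp (- v) * CC (Suc j) v"
  unfolding p_fun_eq[abs_def] by (simp add: CC_integral)

lemma q_fun_CC: "q_fun j x = (if x \<le> 0 then 0 else exp (- x) * CC (Suc j) x / x)"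
proof (cases "x \<le> 0")
  case True
  then show ?thesis
  proof (cases "x = 0")
    case False
    with True have "{0..x} = {}" by auto
    then show ?thesis using True by (simp add: q_fun_def)
  qed (simp add: q_fun_def)
next
  case False
  then show ?thesis by (simp add: q_fun_def integral_p_CC)
qed

lemma CC_meas[measurable]: "CC j \<in> borel_measurable borel"
  by (intro borel_measurable_continuous_onI continuous_at_imp_continuous_on ballI CC_cont)

lemma q_meas[measurable]: "q_fun j \<in> borel_measurable borel"
  unfolding q_fun_CC[abs_def] by measurable

lemma q_nonneg: "x \<ge> 0 \<Longrightarrow> q_fun j x \<ge> 0"
proof (cases "x = 0")
  case False
  assume "x \<ge> 0"
  then have "integral {0..x} (p_fun j) \<ge> 0"
    by (intro integral_nonneg integrable_continuous_interval p_cont p_nonneg) auto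
  then show ?thesis using \<open>x \<ge> 0\<close> by (simp add: q_fun_def)
qed (simp add: q_fun_def)

lemma sigma_Em: "sigma_finite_measure Em"
  by (intro prob_space_imp_sigma_finite prob_Em)

lemma nn_mu:
  assumes g[measurable]: "g \<in> borel_measurable S"
  shows "(\<integral>\<^sup>+x. g x \<partial>mu t) = (\<integral>\<^sup>+u. (\<integral>\<^sup>+e. g (fk t (u, e)) \<partial>Em) \<partial>Um)"
proof -
  have m: "(\<lambda>w. g (fk t w)) \<in> borel_measurable Bm" by measurable
  have "(\<integral>\<^sup>+x. g x \<partial>mu t) = (\<integral>\<^sup>+w. g (fk t w) \<partial>Bm)"
    unfolding mu_def by (rule nn_integral_distr) (auto simp: fk_meas1)
  also have "\<dots> = (\<integral>\<^sup>+u. (\<integral>\<^sup>+e. g (fk t (u, e)) \<partial>Em) \<partial>Um)"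
    unfolding Bm_def using sigma_finite_measure.nn_integral_fst[OF sigma_Em, of "\<lambda>w. g (fk t w)" Um] m
    by (simp add: Bm_def)
  finally show ?thesis .
qed

lemma nn_Um:
  assumes [measurable]: "f \<in> borel_measurable borel"
  shows "(\<integral>\<^sup>+u. f u \<partial>Um) = (\<integral>\<^sup>+u. f u * indicator {0..1} u \<partial>lborel)"
  unfolding Um_def by (subst nn_integral_uniform_measure) (auto simp: divide_ennreal_def)

lemma nn_Em:
  assumes [measurable]: "f \<in> borel_measurable borel"
  shows "(\<integral>\<^sup>+e. f e \<partial>Em) = (\<integral>\<^sup>+e. ennreal (exponential_density 1 e) * f e \<partial>lborel)"
  unfolding Em_def by (subst nn_integral_density) auto

lemma exp_distributed_Em: "distributed Em lborel (\<lambda>x. x) (exponential_density 1)"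
  unfolding distributed_def Em_def by (auto simp: distr_id2)

lemma inner_0:
  assumes "0 \<le> v"
  shows "(\<integral>\<^sup>+e. indicator {0} (max 0 (v - \<bar>e\<bar>)) \<partial>Em) = ennreal (exp (- v))"
proof -
  interpret E: prob_space Em by (rule prob_Em)
  have "(\<integral>\<^sup>+e. indicator {0} (max 0 (v - \<bar>e\<bar>)) \<partial>Em) = (\<integral>\<^sup>+e. indicator {e. v < e} e \<partial>Em)"
  proof (rule nn_integral_cong_AE)
    have "AE e in lborel. e \<noteq> v" by (rule AE_lborel_singleton)
    then have "AE e in Em. e \<noteq> v" unfolding Em_def
      by (subst AE_density) (auto elim: AE_mp)
    moreover have "AE e in Em. e \<ge> 0" unfolding Em_def
      by (subst AE_density) (auto simp: exponential_density_def)
    ultimately show "AE e in Em. indicator {0} (max 0 (v - \<bar>e\<bar>)) = (indicator {e. v < e} e :: ennreal)"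
      by eventually_elim (auto simp: indicator_def max_def)
  qed
  also have "\<dots> = emeasure Em {e \<in> space Em. v < e}"
    by (subst nn_integral_indicator) (auto simp: Em_def)
  also have "\<dots> = ennreal (exp (- v))"
    using E.exponential_distributedD_gt[OF exp_distributed_Em assms] by (simp add: E.emeasure_eq_measure)
  finally show ?thesis .
qed

lemma integral_exp_minus:
  fixes t :: real assumes t: "t \<ge> 0"
  shows "((\<lambda>u. exp (- u)) has_integral (1 - exp (- t))) {0..t}"
proof -
  have "((\<lambda>u. exp (- u)) has_integral ((\<lambda>u. - exp (- u)) t - (\<lambda>u. - exp (- u)) 0)) {0..t}"
    by (rule fundamental_theorem_of_calculus[where a=0 and b=t and f="\<lambda>u. - exp (- u)" and f'="\<lambda>u. exp (- u)"]) (use t in \<open>auto intro!: derivative_eq_intros simp: has_real_derivative_iff_has_vector_derivative[symmetric]\<close>)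
  then show ?thesis by simp
qed

lemma PP_0_eq: "PP 0 u = 1"
proof -
  have "(\<lambda>k. cf 0 k * u^k) = (\<lambda>k. if k = 0 then 1 else 0)"
    by (auto simp: cf_def fun_eq_iff)
  then show ?thesis unfolding PP_def using sums_single[of 0 "\<lambda>_. 1::real"] by (simp add: sums_iff)
qed

lemma p0_eq: "p_fun 0 = (\<lambda>u. exp (- u))"
  by (auto simp: fun_eq_iff p_fun_eq PP_0_eq)

lemma q0_eq: "t > 0 \<Longrightarrow> q_fun 0 t = (1 - exp (- t)) / t"
  using integral_exp_minus[of t] by (simp add: q_fun_def p0_eq integral_unique)

lemma mu_atom:
  assumes t: "t > 0"
  shows "measure (mu t) {0} = q_fun 0 t"
proof -
  have "emeasure (mu t) {0} = (\<integral>\<^sup>+x. indicator {0} x \<partial>mu t)"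
    by (subst nn_integral_indicator) (auto simp: sets_S_iff)
  also have "\<dots> = (\<integral>\<^sup>+u. (\<integral>\<^sup>+e. indicator {0} (fk t (u, e)) \<partial>Em) \<partial>Um)"
    by (rule nn_mu) (auto simp: sets_S_iff)
  also have "\<dots> = (\<integral>\<^sup>+u. ennreal (exp (- (t * u))) \<partial>Um)"
  proof (rule nn_integral_cong_AE)
    show "AE u in Um. (\<integral>\<^sup>+e. indicator {0} (fk t (u, e)) \<partial>Em) = ennreal (exp (- (t * u)))"
      using AE_Um
    proof eventually_elim
      case (elim u)
      then show ?case using inner_0[of "t * u"] t by (simp add: fk_def)
    qed
  qed
  also have "\<dots> = (\<integral>\<^sup>+u. ennreal (indicator {0..1} u * exp (- (t * u))) \<partial>lborel)"
    by (subst nn_Um) (auto intro!: nn_integral_cong simp: indicator_def)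
  also have "\<dots> = ennreal ((1 - exp (- t)) / t)"
  proof (rule nn_integral_has_integral_lebesgue)
    have "((\<lambda>u. exp (- (t * u))) has_integral ((- exp (- (t * 1)) / t) - (- exp (- (t * 0)) / t))) {0..1}"
      by (rule fundamental_theorem_of_calculus) (use t in \<open>auto intro!: derivative_eq_intros simp: has_real_derivative_iff_has_vector_derivative[symmetric]\<close>)
    then show "((\<lambda>u. exp (- (t * u))) has_integral (1 - exp (- t)) / t) {0..1}"
      by (simp add: diff_divide_distrib)
  qed auto
  finally have "emeasure (mu t) {0} = ennreal ((1 - exp (- t)) / t)" .
  then have "measure (mu t) {0} = (1 - exp (- t)) / t"
    using t by (simp add: measure_def)
  then show ?thesis using q0_eq[OF t] by simp
qed

lemma inner_has_integral:
  assumes v: "0 \<le> v"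
  shows "((\<lambda>e. exp (- e) * q_fun j (v - e)) has_integral p_fun (Suc j) v) {0..v}"
proof -
  define F where "F e = - exp (- v) * PP (Suc j) (v - e)" for e
  have "((\<lambda>e. exp (- e) * q_fun j (v - e)) has_integral (F v - F 0)) {0..v}"
  proof (rule fundamental_theorem_of_calculus_interior)
    show "continuous_on {0..v} F" unfolding F_def
      by (intro continuous_at_imp_continuous_on ballI continuous_intros
            continuous_at_compose[OF _ PP_cont, unfolded comp_def] )
    fix e assume e: "e \<in> {0<..<v}"
    have d: "((\<lambda>e. PP (Suc j) (v - e)) has_field_derivative (exp (v - e) * q_fun j (v - e) * (- 1))) (at e)"
      by (rule DERIV_chain2[OF PP_deriv_q]) (use e in \<open>auto intro!: derivative_eq_intros\<close>)
    have dF: "(F has_field_derivative (- exp (- v)) * (exp (v - e) * q_fun j (v - e) * (- 1))) (at e)"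
      unfolding F_def[abs_def] by (rule DERIV_cmult[OF d])
    have eq:  "(- exp (- v)) * (exp (v - e) * q_fun j (v - e) * (- 1)) = exp (- e) * q_fun j (v - e)"
    proof -
      have ee: "exp (- v) * exp (v - e) = exp (- e)" by (simp add: exp_add[symmetric])
      show ?thesis by (simp add: ee[symmetric] algebra_simps)
    qed
    show "(F has_vector_derivative exp (- e) * q_fun j (v - e)) (at e)"
      using dF[unfolded eq] by (simp add: has_real_derivative_iff_has_vector_derivative)
  qed (use v in auto)
  moreover have "F v - F 0 = p_fun (Suc j) v" by (simp add: F_def PP_0 p_fun_eq)
  ultimately show ?thesis by simp
qed

lemma inner_q:
  assumes v: "0 \<le> v" "v < t"
  shows "(\<integral>\<^sup>+e. ennreal (indicator {0<..<t} (max 0 (v - \<bar>e\<bar>)) * q_fun j (max 0 (v - \<bar>e\<bar>))) \<partial>Em)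
    = ennreal (p_fun (Suc j) v)"
proof -
  have "(\<integral>\<^sup>+e. ennreal (indicator {0<..<t} (max 0 (v - \<bar>e\<bar>)) * q_fun j (max 0 (v - \<bar>e\<bar>))) \<partial>Em)
     = (\<integral>\<^sup>+e. ennreal (exponential_density 1 e) * ennreal (indicator {0<..<t} (max 0 (v - \<bar>e\<bar>)) * q_fun j (max 0 (v - \<bar>e\<bar>))) \<partial>lborel)"
    by (rule nn_Em) measurable
  also have "\<dots> = (\<integral>\<^sup>+e. ennreal (indicator {0..v} e * (exp (- e) * q_fun j (v - e))) \<partial>lborel)"
  proof (rule nn_integral_cong_AE)
    show "AE e in lborel. ennreal (exponential_density 1 e) * ennreal (indicator {0<..<t} (max 0 (v - \<bar>e\<bar>)) * q_fun j (max 0 (v - \<bar>e\<bar>)))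
        = ennreal (indicator {0..v} e * (exp (- e) * q_fun j (v - e)))"
      using AE_lborel_singleton[of v]
    proof eventually_elim
      case (elim e)
      show ?case
      proof (cases "e < 0")
        case True then show ?thesis by (simp add: exponential_density_def)
      next
        case False
        show ?thesis
        proof (cases "e < v")
          case True
          then have "max 0 (v - \<bar>e\<bar>) = v - e" "v - e \<in> {0<..<t}" using False v by auto
          then show ?thesis using False True
            by (simp add: exponential_density_def ennreal_mult'' q_nonneg)
        next
          case False2: False
          then have "max 0 (v - \<bar>e\<bar>) = 0" using False by auto
          then show ?thesis using False2 elim by (simp add: indicator_def)
        qed
      qed
    qed
  qed
  also have "\<dots> = ennreal (p_fun (Suc j) v)"
    by (rule nn_integral_has_integral_lebesgue[OF _ inner_has_integral[OF v(1)]])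
       (auto intro!: mult_nonneg_nonneg q_nonneg)
  finally show ?thesis .
qed

lemma mu_int:
  assumes t: "t > 0"
  shows "(\<integral>\<^sup>+x. ennreal (indicator {0<..<t} x * q_fun j x) \<partial>mu t) = ennreal (q_fun (Suc j) t)"
proof -
  have pm[measurable]: "p_fun (Suc j) \<in> borel_measurable borel"
    by (intro borel_measurable_continuous_onI p_cont)
  have "(\<integral>\<^sup>+x. ennreal (indicator {0<..<t} x * q_fun j x) \<partial>mu t)
      = (\<integral>\<^sup>+u. (\<integral>\<^sup>+e. ennreal (indicator {0<..<t} (fk t (u, e)) * q_fun j (fk t (u, e))) \<partial>Em) \<partial>Um)"
    by (rule nn_mu) measurable
  also have "\<dots> = (\<integral>\<^sup>+u. ennreal (p_fun (Suc j) (t * u)) \<partial>Um)"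
  proof (rule nn_integral_cong_AE)
    show "AE u in Um. (\<integral>\<^sup>+e. ennreal (indicator {0<..<t} (fk t (u, e)) * q_fun j (fk t (u, e))) \<partial>Em)
        = ennreal (p_fun (Suc j) (t * u))"
      using AE_Um
    proof eventually_elim
      case (elim u)
      then have "0 \<le> t * u" "t * u < t" using t by auto
      then show ?case using inner_q[of "t * u" t j] by (simp add: fk_def)
    qed
  qed
  also have "\<dots> = (\<integral>\<^sup>+u. ennreal (indicator {0..1} u * p_fun (Suc j) (t * u)) \<partial>lborel)"
    by (subst nn_Um) (auto intro!: nn_integral_cong simp: indicator_def)
  finally have eq1: "(\<integral>\<^sup>+x. ennreal (indicator {0<..<t} x * q_fun j x) \<partial>mu t)
      = (\<integral>\<^sup>+u. ennreal (indicator {0..1} u * p_fun (Suc j) (t * u)) \<partial>lborel)" .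
  have "(\<integral>\<^sup>+x. ennreal (indicator {0..t} x * p_fun (Suc j) x) \<partial>lborel)
      = ennreal \<bar>t\<bar> * (\<integral>\<^sup>+x. ennreal (indicator {0..t} (0 + t * x) * p_fun (Suc j) (0 + t * x)) \<partial>lborel)"
    by (rule nn_integral_real_affine) (use t in auto)
  also have "(\<lambda>x. ennreal (indicator {0..t} (0 + t * x) * p_fun (Suc j) (0 + t * x)))
      = (\<lambda>x. ennreal (indicator {0..1} x * p_fun (Suc j) (t * x)))"
    using t by (auto simp: fun_eq_iff indicator_def zero_le_mult_iff)
  finally have eq2: "(\<integral>\<^sup>+x. ennreal (indicator {0..t} x * p_fun (Suc j) x) \<partial>lborel)
      = ennreal t * (\<integral>\<^sup>+u. ennreal (indicator {0..1} u * p_fun (Suc j) (t * u)) \<partial>lborel)"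
    using t by simp
  have "(\<integral>\<^sup>+x. ennreal (indicator {0..t} x * p_fun (Suc j) x) \<partial>lborel) = ennreal (integral {0..t} (p_fun (Suc j)))"
    by (rule nn_integral_has_integral_lebesgue)
       (auto intro!: p_nonneg integrable_integral integrable_continuous_interval p_cont)
  with eq2 have eq3: "ennreal t * (\<integral>\<^sup>+u. ennreal (indicator {0..1} u * p_fun (Suc j) (t * u)) \<partial>lborel)
      = ennreal (integral {0..t} (p_fun (Suc j)))" by simp
  have "(\<integral>\<^sup>+u. ennreal (indicator {0..1} u * p_fun (Suc j) (t * u)) \<partial>lborel)
      = ennreal (1 / t) * (ennreal t * (\<integral>\<^sup>+u. ennreal (indicator {0..1} u * p_fun (Suc j) (t * u)) \<partial>lborel))"
    using t by (simp add: mult.assoc[symmetric] ennreal_mult''[symmetric])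
  also have "\<dots> = ennreal (1 / t) * ennreal (integral {0..t} (p_fun (Suc j)))" by (simp add: eq3)
  also have "\<dots> = ennreal (q_fun (Suc j) t)"
    using t by (simp add: q_fun_def ennreal_mult'[symmetric])
  finally show ?thesis using eq1 by simp
qed

definition Pn :: "nat \<Rightarrow> (nat \<Rightarrow> real) measure" where
  "Pn n = (\<Pi>\<^sub>M i\<in>{..n}. S)"

definition upd :: "nat \<Rightarrow> (nat \<Rightarrow> real) \<Rightarrow> real \<Rightarrow> (nat \<Rightarrow> real)" where
  "upd n x y = (\<lambda>i\<in>{..Suc n}. if i = Suc n then y else x i)"

definition Kn :: "(real \<Rightarrow> real measure) \<Rightarrow> nat \<Rightarrow> (nat \<Rightarrow> real) \<Rightarrow> (nat \<Rightarrow> real) measure" where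
  "Kn \<nu> n x = distr (\<nu> (x n)) (Pn (Suc n)) (upd n x)"

lemma fdd_Suc': "fdd \<nu> t (Suc n) = fdd \<nu> t n \<bind> Kn \<nu> n"
  unfolding Kn_def[abs_def] Pn_def upd_def by simp

lemma meas_sets_trans: "sets M = sets M' \<Longrightarrow> f \<in> M' \<rightarrow>\<^sub>M N \<Longrightarrow> f \<in> M \<rightarrow>\<^sub>M N"
  by (subst measurable_cong_sets[of M M' N N]) auto

lemma fdd_0': "fdd \<nu> t 0 = return (Pn 0) (\<lambda>i\<in>{..0}. t)"
  by (simp add: Pn_def)

lemma space_Pn: "space (Pn n) = PiE {..n} (\<lambda>_. {0..})"
  by (simp add: Pn_def space_PiM space_S)

lemma comp_meas[measurable]: "i \<le> n \<Longrightarrow> (\<lambda>x. x i) \<in> Pn n \<rightarrow>\<^sub>M S"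
  unfolding Pn_def by (rule measurable_component_singleton) simp

lemma comp_meas_borel[measurable]: "i \<le> n \<Longrightarrow> (\<lambda>x. x i) \<in> Pn n \<rightarrow>\<^sub>M borel"
  using measurable_compose[OF comp_meas S_id_borel] by simp

lemma upd_space: "x \<in> space (Pn n) \<Longrightarrow> y \<in> {0..} \<Longrightarrow> upd n x y \<in> space (Pn (Suc n))"
  by (auto simp: space_Pn upd_def PiE_def Pi_def extensional_def)

lemma upd_meas: "(\<lambda>(x, y). upd n x y) \<in> Pn n \<Otimes>\<^sub>M S \<rightarrow>\<^sub>M Pn (Suc n)"
proof -
  have "(\<lambda>p. \<lambda>i\<in>{..Suc n}. (if i = Suc n then snd p else fst p i)) \<in> Pn n \<Otimes>\<^sub>M S \<rightarrow>\<^sub>M (\<Pi>\<^sub>M i\<in>{..Suc n}. S)"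
  proof (rule measurable_restrict)
    fix i assume i: "i \<in> {..Suc n}"
    show "(\<lambda>p. if i = Suc n then snd p else fst p i) \<in> Pn n \<Otimes>\<^sub>M S \<rightarrow>\<^sub>M S"
    proof (cases "i = Suc n")
      case True then show ?thesis by simp
    next
      case False
      then have "i \<le> n" using i by auto
      then have "(\<lambda>p. fst p i) \<in> Pn n \<Otimes>\<^sub>M S \<rightarrow>\<^sub>M S"
        by (intro measurable_compose[OF measurable_fst comp_meas])
      then show ?thesis using False by simp
    qed
  qed
  then show ?thesis by (simp add: split_beta' upd_def[abs_def] Pn_def)
qed

context
  fixes \<nu> :: "real \<Rightarrow> real measure"
  assumes K: "\<nu> \<in> S \<rightarrow>\<^sub>M prob_algebra S"
begin

lemma K_sub: "\<nu> \<in> S \<rightarrow>\<^sub>M subprob_algebra S"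
  using K by (rule measurable_prob_algebraD)

lemma nu_space: "x \<in> {0..} \<Longrightarrow> \<nu> x \<in> space (prob_algebra S)"
  using measurable_space[OF K, of x] by (simp add: space_S)

lemma prob_nu: "x \<in> {0..} \<Longrightarrow> prob_space (\<nu> x)"
  using nu_space by (simp add: space_prob_algebra)

lemma sets_nu: "x \<in> {0..} \<Longrightarrow> sets (\<nu> x) = sets S"
  using nu_space by (simp add: space_prob_algebra)

lemma Kn_meas: "Kn \<nu> n \<in> Pn n \<rightarrow>\<^sub>M prob_algebra (Pn (Suc n))"
  unfolding Kn_def[abs_def]
  by (rule measurable_distr_prob_space2[OF measurable_compose[OF comp_meas K] upd_meas]) simp

lemma Kn_sub: "Kn \<nu> n \<in> Pn n \<rightarrow>\<^sub>M subprob_algebra (Pn (Suc n))"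
  using Kn_meas by (rule measurable_prob_algebraD)

lemma fdd_space: "t \<in> {0..} \<Longrightarrow> fdd \<nu> t n \<in> space (prob_algebra (Pn n))"
proof (induction n)
  case 0
  have "(\<lambda>i\<in>{..0::nat}. t) \<in> space (Pn 0)" using 0 by (simp add: space_Pn)
  then show ?case unfolding fdd_0' by (rule measurable_space[OF measurable_return_prob_space])
next
  case (Suc n)
  then have A: "fdd \<nu> t n \<in> space (prob_algebra (Pn n))" by simp
  show ?case unfolding fdd_Suc' space_prob_algebra
    using sets_bind'[OF A Kn_meas] prob_space_bind'[OF A Kn_meas] by simp
qed

lemma fdd_prob: "t \<in> {0..} \<Longrightarrow> prob_space (fdd \<nu> t n)"
  using fdd_space by (simp add: space_prob_algebra)

lemma fdd_sets: "t \<in> {0..} \<Longrightarrow> sets (fdd \<nu> t n) = sets (Pn n)"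
  using fdd_space by (simp add: space_prob_algebra)

lemma fdd_space_ne: "t \<in> {0..} \<Longrightarrow> space (fdd \<nu> t n) \<noteq> {}"
  using fdd_prob prob_space.not_empty by blast

primrec Kit :: "nat \<Rightarrow> real \<Rightarrow> real measure" where
  "Kit 0 x = return S x"
| "Kit (Suc n) x = Kit n x \<bind> \<nu>"

lemma Kit_meas: "Kit n \<in> S \<rightarrow>\<^sub>M prob_algebra S"
proof (induction n)
  case 0 then show ?case by (simp add: measurable_return_prob_space[unfolded comp_def])
next
  case (Suc n)
  have "(\<lambda>x. Kit n x \<bind> \<nu>) \<in> S \<rightarrow>\<^sub>M prob_algebra S"
    by (rule measurable_bind_prob_space[OF Suc K])
  then show ?case by simp
qed

lemma Kit_sub: "Kit n \<in> S \<rightarrow>\<^sub>M subprob_algebra S"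
  using Kit_meas by (rule measurable_prob_algebraD)

lemma law_eq: "t \<in> {0..} \<Longrightarrow> distr (fdd \<nu> t n) S (\<lambda>x. x n) = Kit n t"
proof (induction n)
  case 0
  have "(\<lambda>i\<in>{..0::nat}. t) \<in> space (Pn 0)" using 0 by (simp add: space_Pn)
  then show ?case unfolding fdd_0' by (subst distr_return) (auto intro: comp_meas)
next
  case (Suc n)
  have "distr (fdd \<nu> t (Suc n)) S (\<lambda>x. x (Suc n))
      = fdd \<nu> t n \<bind> (\<lambda>x. distr (Kn \<nu> n x) S (\<lambda>z. z (Suc n)))"
    unfolding fdd_Suc' by (rule distr_bind[OF meas_sets_trans[OF fdd_sets[OF Suc.prems] Kn_sub] fdd_space_ne[OF Suc.prems] comp_meas]) simp
  also have "\<dots> = fdd \<nu> t n \<bind> (\<lambda>x. \<nu> (x n))"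
  proof (rule bind_cong[OF refl])
    fix x assume x: "x \<in> space (fdd \<nu> t n)"
    then have x': "x \<in> space (Pn n)" using fdd_sets[OF Suc.prems] sets_eq_imp_space_eq by blast
    then have xn: "x n \<in> {0..}" by (auto simp: space_Pn)
    have um: "upd n x \<in> \<nu> (x n) \<rightarrow>\<^sub>M Pn (Suc n)"
      using meas_sets_trans[OF sets_nu[OF xn] measurable_Pair2[OF upd_meas x']] by simp
    have "distr (Kn \<nu> n x) S (\<lambda>z. z (Suc n)) = distr (\<nu> (x n)) S (\<lambda>y. upd n x y (Suc n))"
      unfolding Kn_def by (subst distr_distr[OF comp_meas um]) (auto simp: comp_def)
    also have "\<dots> = distr (\<nu> (x n)) S (\<lambda>y. y)" by (simp add: upd_def)
    also have "\<dots> = \<nu> (x n)" using sets_nu[OF xn] by (simp add: distr_id2)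
    finally show "distr (Kn \<nu> n x) S (\<lambda>z. z (Suc n)) = \<nu> (x n)" .
  qed
  also have "\<dots> = distr (fdd \<nu> t n) S (\<lambda>x. x n) \<bind> \<nu>"
    by (rule bind_distr[symmetric, OF meas_sets_trans[OF fdd_sets[OF Suc.prems] comp_meas] K_sub fdd_space_ne[OF Suc.prems]]) simp
  also have "\<dots> = Kit (Suc n) t" using Suc by simp
  finally show ?case .
qed

lemma Kit_first: "x \<in> {0..} \<Longrightarrow> Kit (Suc n) x = \<nu> x \<bind> Kit n"
proof (induction n)
  case 0
  have "return S x \<bind> \<nu> = \<nu> x" by (rule bind_return[OF K_sub]) (use 0 in \<open>simp add: space_S\<close>)
  moreover have "\<nu> x \<bind> return S = \<nu> x" by (rule bind_return'') (rule sets_nu[OF 0])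
  ultimately show ?case by simp
next
  case (Suc n)
  have "Kit (Suc (Suc n)) x = (\<nu> x \<bind> Kit n) \<bind> \<nu>" using Suc by simp
  also have "\<dots> = \<nu> x \<bind> (\<lambda>y. Kit n y \<bind> \<nu>)"
    by (rule bind_assoc[OF meas_sets_trans[OF sets_nu[OF Suc.prems] Kit_sub] K_sub])
  also have "(\<lambda>y. Kit n y \<bind> \<nu>) = Kit (Suc n)" by (rule ext) simp
  finally show ?case .
qed

lemma emeasure_fdd_Suc:
  assumes t: "t \<in> {0..}" and A: "A \<in> sets (Pn (Suc n))"
  shows "emeasure (fdd \<nu> t (Suc n)) A = (\<integral>\<^sup>+x. emeasure (\<nu> (x n)) (upd n x -` A \<inter> space S) \<partial>fdd \<nu> t n)"
proof -
  have "emeasure (fdd \<nu> t (Suc n)) A = (\<integral>\<^sup>+x. emeasure (Kn \<nu> n x) A \<partial>fdd \<nu> t n)"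
    unfolding fdd_Suc' by (rule emeasure_bind_prob_algebra[OF fdd_space[OF t] Kn_meas A])
  also have "\<dots> = (\<integral>\<^sup>+x. emeasure (\<nu> (x n)) (upd n x -` A \<inter> space S) \<partial>fdd \<nu> t n)"
  proof (rule nn_integral_cong)
    fix x assume x: "x \<in> space (fdd \<nu> t n)"
    then have x': "x \<in> space (Pn n)" using fdd_sets[OF t] sets_eq_imp_space_eq by blast
    then have xn: "x n \<in> {0..}" by (auto simp: space_Pn)
    have um: "upd n x \<in> \<nu> (x n) \<rightarrow>\<^sub>M Pn (Suc n)"
      using meas_sets_trans[OF sets_nu[OF xn] measurable_Pair2[OF upd_meas x']] by simp
    show "emeasure (Kn \<nu> n x) A = emeasure (\<nu> (x n)) (upd n x -` A \<inter> space S)"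
      unfolding Kn_def using emeasure_distr[OF um A] sets_eq_imp_space_eq[OF sets_nu[OF xn]] by simp
  qed
  finally show ?thesis .
qed

definition gz :: "real \<Rightarrow> ennreal" where
  "gz y = indicator {0<..} y * emeasure (\<nu> y) {0}"

lemma gz_meas[measurable]: "gz \<in> borel_measurable S"
proof -
  have "{0::real} \<in> sets S" by (simp add: sets_S_iff)
  then have m: "(\<lambda>y. emeasure (\<nu> y) {0}) \<in> borel_measurable S"
    using measurable_compose[OF K_sub measurable_emeasure_subprob_algebra] by blast
  show ?thesis unfolding gz_def by (intro borel_measurable_times_ennreal m) measurable
qed

definition Hf :: "nat \<Rightarrow> real \<Rightarrow> ennreal" where
  "Hf j x = (\<integral>\<^sup>+y. gz y \<partial>Kit j x)"

lemma E_event: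
  assumes t: "t \<in> {0..}"
  shows "emeasure (fdd \<nu> t (Suc j)) {x \<in> space (Pn (Suc j)). 0 < x j \<and> x (Suc j) = 0} = Hf j t"
proof -
  have A: "{x \<in> space (Pn (Suc j)). 0 < x j \<and> x (Suc j) = 0} \<in> sets (Pn (Suc j))" by measurable
  have "emeasure (fdd \<nu> t (Suc j)) {x \<in> space (Pn (Suc j)). 0 < x j \<and> x (Suc j) = 0}
      = (\<integral>\<^sup>+x. emeasure (\<nu> (x j)) (upd j x -` {x \<in> space (Pn (Suc j)). 0 < x j \<and> x (Suc j) = 0} \<inter> space S) \<partial>fdd \<nu> t j)"
    by (rule emeasure_fdd_Suc[OF t A])
  also have "\<dots> = (\<integral>\<^sup>+x. gz (x j) \<partial>fdd \<nu> t j)"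
  proof (rule nn_integral_cong)
    fix x assume x: "x \<in> space (fdd \<nu> t j)"
    then have x': "x \<in> space (Pn j)" using fdd_sets[OF t] sets_eq_imp_space_eq by blast
    have "upd j x -` {x \<in> space (Pn (Suc j)). 0 < x j \<and> x (Suc j) = 0} \<inter> space S
        = (if 0 < x j then {0} else {})"
      using upd_space[OF x'] by (auto simp: space_S upd_def)
    then show "emeasure (\<nu> (x j)) (upd j x -` {x \<in> space (Pn (Suc j)). 0 < x j \<and> x (Suc j) = 0} \<inter> space S) = gz (x j)"
      by (simp add: gz_def)
  qed
  also have "\<dots> = (\<integral>\<^sup>+y. gz y \<partial>distr (fdd \<nu> t j) S (\<lambda>x. x j))"
    by (rule nn_integral_distr[symmetric, OF meas_sets_trans[OF fdd_sets[OF t] comp_meas]]) auto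
  also have "\<dots> = Hf j t" by (simp add: law_eq[OF t] Hf_def)
  finally show ?thesis .
qed

lemma H_Suc:
  assumes x: "x \<in> {0..}"
  shows "Hf (Suc j) x = (\<integral>\<^sup>+y. Hf j y \<partial>\<nu> x)"
  unfolding Hf_def Kit_first[OF x]
  by (rule nn_integral_bind[OF gz_meas meas_sets_trans[OF sets_nu[OF x] Kit_sub]])

lemma H_0: "x \<in> {0..} \<Longrightarrow> Hf 0 x = gz x"
  by (simp add: Hf_def nn_integral_return space_S)

lemma Hf_meas[measurable]: "Hf j \<in> borel_measurable S"
  unfolding Hf_def[abs_def]
  by (rule measurable_compose[OF Kit_sub nn_integral_measurable_subprob_algebra[OF gz_meas]])

lemma nu_return:
  assumes "measure (\<nu> 0) {0} = 1"
  shows "\<nu> 0 = return S 0"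
proof (rule measure_eqI)
  interpret P: prob_space "\<nu> 0" using prob_nu[of 0] by simp
  have s: "sets (\<nu> 0) = sets S" using sets_nu[of 0] by simp
  then show "sets (\<nu> 0) = sets (return S 0)" by simp
  have "{0::real} \<in> sets (\<nu> 0)" using s by (simp add: sets_S_iff)
  then have ae: "AE x in \<nu> 0. x \<in> {0}" using assms by (intro P.AE_prob_1) auto
  fix A assume A: "A \<in> sets (\<nu> 0)"
  show "emeasure (\<nu> 0) A = emeasure (return S 0) A"
  proof (cases "0 \<in> A")
    case True
    have "emeasure (\<nu> 0) A = emeasure (\<nu> 0) {0}"
      by (rule emeasure_eq_AE) (use ae A True \<open>{0} \<in> sets (\<nu> 0)\<close> in auto)
    then show ?thesis using True A s assms by (simp add: P.emeasure_eq_measure)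
  next
    case False
    have "emeasure (\<nu> 0) A = emeasure (\<nu> 0) {}"
      by (rule emeasure_eq_AE) (use ae A False in auto)
    then show ?thesis using False A s by simp
  qed
qed

lemma Kit_at0:
  assumes "measure (\<nu> 0) {0} = 1"
  shows "Kit j 0 = return S 0"
proof (induction j)
  case (Suc j)
  have "return S 0 \<bind> \<nu> = \<nu> 0" by (rule bind_return[OF K_sub]) (simp add: space_S)
  then show ?case using Suc nu_return[OF assms] by simp
qed simp

lemma Hf_at0:
  assumes "measure (\<nu> 0) {0} = 1"
  shows "Hf j 0 = 0"
  unfolding Hf_def Kit_at0[OF assms] by (simp add: nn_integral_return space_S gz_def)

end

lemma finite_card_iff:
  "(finite A \<and> card A = j) \<longleftrightarrow> (\<exists>N. card (A \<inter> {..N}) = j \<and> (\<forall>n>N. n \<notin> (A::nat set)))"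
proof
  assume a: "finite A \<and> card A = j"
  define N where "N = (if A = {} then 0 else Max A)"
  have h1: "A \<inter> {..N} = A" using a by (auto simp: N_def)
  have h2: "\<forall>n>N. n \<notin> A" using a by (auto simp: N_def split: if_splits)
  show "\<exists>N. card (A \<inter> {..N}) = j \<and> (\<forall>n>N. n \<notin> A)" using a h1 h2 by (intro exI[of _ N]) auto
next
  assume "\<exists>N. card (A \<inter> {..N}) = j \<and> (\<forall>n>N. n \<notin> A)"
  then obtain N where N: "card (A \<inter> {..N}) = j" "\<forall>n>N. n \<notin> A" by blast
  then have "A \<inter> {..N} = A" by (auto simp: not_le[symmetric])
  then show "finite A \<and> card A = j" using N by (metis finite_Int finite_atMost)
qed

lemma card_filter_sum: "real (card {n\<in>{..N::nat}. P n}) = (\<Sum>n\<le>N. if P n then 1 else 0)"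
  by (simp add: sum.If_cases Int_def)

lemma snth_S_borel[measurable]: "(\<lambda>\<omega>. \<omega> !! n) \<in> stream_space S \<rightarrow>\<^sub>M borel"
  using measurable_compose[OF measurable_snth S_id_borel] by simp

lemma visits_eq_alt: "visits_eq t j = {\<omega> \<in> space (stream_space S).
   \<exists>N. (\<Sum>n\<le>N. if 1 \<le> n \<and> 0 < \<omega> !! n \<and> \<omega> !! n < t then 1 else 0) = real j \<and>
       (\<forall>n. N < n \<longrightarrow> \<not> (1 \<le> n \<and> 0 < \<omega> !! n \<and> \<omega> !! n < t))}"
proof -
  have *: "{n. n \<ge> 1 \<and> \<omega> !! n \<in> {0<..<t}} \<inter> {..N} = {n\<in>{..N}. 1 \<le> n \<and> 0 < \<omega> !! n \<and> \<omega> !! n < t}" for \<omega> N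
    by auto
  show ?thesis
    unfolding visits_eq_def finite_card_iff space_stream_space space_S *
    by (simp add: card_filter_sum[symmetric])
qed

lemma visits_eq_sets[measurable]: "visits_eq t j \<in> sets (stream_space S)"
  unfolding visits_eq_alt by measurable

lemma path_lemma:
  fixes x :: "nat \<Rightarrow> real"
  assumes nn: "\<And>n. x n \<ge> 0" and x0: "x 0 = t" and t: "t > 0"
    and good: "\<And>n. (0 < x n \<longrightarrow> x (Suc n) < x n) \<and> (x n = 0 \<longrightarrow> x (Suc n) = 0)"
  shows "(finite {n. n \<ge> 1 \<and> x n \<in> {0<..<t}} \<and> card {n. n \<ge> 1 \<and> x n \<in> {0<..<t}} = j)
    \<longleftrightarrow> (0 < x j \<and> x (Suc j) = 0)"
proof -
  have dec1: "x (Suc n) \<le> x n" for n using good[of n] nn[of n] by (cases "x n = 0") auto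
  have dec: "n \<le> m \<Longrightarrow> x m \<le> x n" for n m
    by (induction m rule: dec_induct) (auto intro: order_trans[OF dec1])
  have lt: "n \<ge> 1 \<Longrightarrow> x n < t" for n
    using dec[of 1 n] good[of 0] x0 t by auto
  have A: "{n. n \<ge> 1 \<and> x n \<in> {0<..<t}} = {n. n \<ge> 1 \<and> 0 < x n}" using lt by auto
  show ?thesis unfolding A
  proof
    assume a: "finite {n. 1 \<le> n \<and> 0 < x n} \<and> card {n. 1 \<le> n \<and> 0 < x n} = j"
    show "0 < x j \<and> x (Suc j) = 0"
    proof (rule ccontr)
      assume c: "\<not> (0 < x j \<and> x (Suc j) = 0)"
      show False
      proof (cases "x j = 0")
        case True
        then have "j \<noteq> 0" using x0 t by (cases j) auto
        have "{n. 1 \<le> n \<and> 0 < x n} \<subseteq> {1..<j}"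
        proof
          fix n assume "n \<in> {n. 1 \<le> n \<and> 0 < x n}"
          moreover have "n \<ge> j \<Longrightarrow> x n \<le> 0" using dec[of j n] True by auto
          ultimately show "n \<in> {1..<j}" by force
        qed
        then have "card {n. 1 \<le> n \<and> 0 < x n} \<le> card {1..<j}" by (rule card_mono[rotated]) simp
        then show False using a \<open>j \<noteq> 0\<close> by simp
      next
        case False
        then have "0 < x j" using nn[of j] by auto
        with c have "x (Suc j) \<noteq> 0" by auto
        then have pos: "0 < x (Suc j)" using nn[of "Suc j"] by auto
        have "{1..Suc j} \<subseteq> {n. 1 \<le> n \<and> 0 < x n}"
        proof
          fix n assume "n \<in> {1..Suc j}"
          then show "n \<in> {n. 1 \<le> n \<and> 0 < x n}" using dec[of n "Suc j"] pos by auto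
        qed
        then have "card {1..Suc j} \<le> card {n. 1 \<le> n \<and> 0 < x n}" using a by (intro card_mono) auto
        then show False using a by simp
      qed
    qed
  next
    assume a: "0 < x j \<and> x (Suc j) = 0"
    have "{n. 1 \<le> n \<and> 0 < x n} = {1..j}"
    proof (intro set_eqI iffI)
      fix n assume "n \<in> {n. 1 \<le> n \<and> 0 < x n}"
      moreover have "n \<ge> Suc j \<Longrightarrow> x n \<le> 0" using dec[of "Suc j" n] a by auto
      ultimately show "n \<in> {1..j}" by force
    next
      fix n assume "n \<in> {1..j}"
      then show "n \<in> {n. 1 \<le> n \<and> 0 < x n}" using dec[of n j] a by auto
    qed
    then show "finite {n. 1 \<le> n \<and> 0 < x n} \<and> card {n. 1 \<le> n \<and> 0 < x n} = j" by simp
  qed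
qed

lemma proj_meas: "(\<lambda>\<omega>. \<lambda>i\<in>{..n}. \<omega> !! i) \<in> stream_space S \<rightarrow>\<^sub>M Pn n"
  unfolding Pn_def by (rule measurable_restrict) simp

lemma proj_space: "\<omega> \<in> streams {0..} \<Longrightarrow> (\<lambda>i\<in>{..n}. \<omega> !! i) \<in> space (Pn n)"
  by (auto simp: space_Pn streams_iff_snth)

lemma null_from_emeasure:
  assumes "N \<in> sets M" "emeasure M N = 0" "{x\<in>space M. \<not> P x} \<subseteq> N"
  shows "AE x in M. P x"
  using assms by (intro AE_I'[of N]) auto

context
  fixes \<nu> :: "real \<Rightarrow> real measure"
  assumes K: "\<nu> \<in> S \<rightarrow>\<^sub>M prob_algebra S"
    and nu0: "measure (\<nu> 0) {0} = 1"
    and nult: "\<And>s. s > 0 \<Longrightarrow> measure (\<nu> s) {0..<s} = 1"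
begin

context
  fixes t :: real and P :: "real stream measure"
  assumes t: "t > 0" and CL: "chain_law \<nu> t P"
begin

lemma P_prob: "prob_space P" using CL by (simp add: chain_law_def)
lemma P_sets: "sets P = sets (stream_space S)" using CL by (simp add: chain_law_def)
lemma P_space: "space P = streams {0..}"
  using sets_eq_imp_space_eq[OF P_sets] by (simp add: space_stream_space space_S)

lemma P_fdd:
  assumes B: "B \<in> sets (Pn n)"
  shows "emeasure P {\<omega>\<in>space P. (\<lambda>i\<in>{..n}. \<omega> !! i) \<in> B} = emeasure (fdd \<nu> t n) B"
proof -
  have pm: "(\<lambda>\<omega>. \<lambda>i\<in>{..n}. \<omega> !! i) \<in> P \<rightarrow>\<^sub>M Pn n"
    by (rule meas_sets_trans[OF P_sets proj_meas])
  have "emeasure (fdd \<nu> t n) B = emeasure (distr P (Pn n) (\<lambda>\<omega>. \<lambda>i\<in>{..n}. \<omega> !! i)) B"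
    using CL by (simp add: chain_law_def Pn_def)
  also have "\<dots> = emeasure P ((\<lambda>\<omega>. \<lambda>i\<in>{..n}. \<omega> !! i) -` B \<inter> space P)"
    by (rule emeasure_distr[OF pm B])
  finally show ?thesis by (simp add: vimage_def Int_def conj_commute)
qed

lemma P_set_sets:
  assumes B: "B \<in> sets (Pn n)"
  shows "{\<omega>\<in>space P. (\<lambda>i\<in>{..n}. \<omega> !! i) \<in> B} \<in> sets P"
proof -
  have pm: "(\<lambda>\<omega>. \<lambda>i\<in>{..n}. \<omega> !! i) \<in> P \<rightarrow>\<^sub>M Pn n"
    by (rule meas_sets_trans[OF P_sets proj_meas])
  show ?thesis using measurable_sets[OF pm B] by (simp add: vimage_def Int_def conj_commute)
qed

lemma AE_start: "AE \<omega> in P. \<omega> !! 0 = t"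
proof -
  define B where "B = {x \<in> space (Pn 0). x 0 \<noteq> t}"
  have B: "B \<in> sets (Pn 0)" unfolding B_def by measurable
  have x0: "(\<lambda>i\<in>{..0::nat}. t) \<in> space (Pn 0)" using t by (simp add: space_Pn)
  have "emeasure (fdd \<nu> t 0) B = 0"
    unfolding fdd_0' using B x0 by (simp add: B_def)
  show ?thesis
  proof (rule null_from_emeasure[OF P_set_sets[OF B]])
    show "emeasure P {\<omega>\<in>space P. (\<lambda>i\<in>{..0}. \<omega> !! i) \<in> B} = 0"
      using P_fdd[OF B] \<open>emeasure (fdd \<nu> t 0) B = 0\<close> by simp
    have "\<And>\<omega>. \<omega> \<in> streams {0..} \<Longrightarrow> (\<lambda>i\<in>{0}. \<omega> !! i) \<in> space (Pn 0)"
      using proj_space[of _ 0] by simp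
    then show "{\<omega> \<in> space P. \<not> \<omega> !! 0 = t} \<subseteq> {\<omega>\<in>space P. (\<lambda>i\<in>{..0}. \<omega> !! i) \<in> B}"
      by (auto simp: B_def P_space)
  qed
qed

lemma step_null:
  assumes s: "s \<ge> 0"
  shows "emeasure (\<nu> s) {y \<in> space S. \<not> ((0 < s \<longrightarrow> y < s) \<and> (s = 0 \<longrightarrow> y = 0))} = 0"
proof -
  interpret N: prob_space "\<nu> s" using prob_nu[OF K] s by simp
  have sp: "space (\<nu> s) = space S" using sets_eq_imp_space_eq[OF sets_nu[OF K]] s by simp
  show ?thesis
  proof (cases "s = 0")
    case True
    have "{y \<in> space S. \<not> ((0 < s \<longrightarrow> y < s) \<and> (s = 0 \<longrightarrow> y = 0))} = space (\<nu> s) - {0}"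
      using True sp by auto
    moreover have "{0} \<in> N.events" using sets_nu[OF K] s by (simp add: sets_S_iff)
    moreover have "measure (\<nu> s) (space (\<nu> s) - {0}) = 0"
      using N.prob_compl[of "{0}"] nu0 True \<open>{0} \<in> N.events\<close> by simp
    ultimately show ?thesis by (simp add: N.emeasure_eq_measure)
  next
    case False
    then have s': "s > 0" using s by simp
    have "{y \<in> space S. \<not> ((0 < s \<longrightarrow> y < s) \<and> (s = 0 \<longrightarrow> y = 0))} = space (\<nu> s) - {0..<s}"
      using s' sp by (auto simp: space_S)
    moreover have "{0..<s} \<in> N.events" using sets_nu[OF K] s by (auto simp: sets_S_iff)
    ultimately show ?thesis using N.prob_compl[of "{0..<s}"] nult[OF s'] by (simp add: N.emeasure_eq_measure)
  qed
qed

lemma AE_good: "AE \<omega> in P. \<forall>n. (0 < \<omega> !! n \<longrightarrow> \<omega> !! Suc n < \<omega> !! n) \<and> (\<omega> !! n = 0 \<longrightarrow> \<omega> !! Suc n = 0)"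
proof (subst AE_all_countable, intro allI)
  fix n
  define B where "B = {x \<in> space (Pn (Suc n)). \<not> ((0 < x n \<longrightarrow> x (Suc n) < x n) \<and> (x n = 0 \<longrightarrow> x (Suc n) = 0))}"
  have B: "B \<in> sets (Pn (Suc n))" unfolding B_def by measurable
  have t0: "t \<in> {0..}" using t by simp
  have "emeasure (fdd \<nu> t (Suc n)) B = (\<integral>\<^sup>+x. emeasure (\<nu> (x n)) (upd n x -` B \<inter> space S) \<partial>fdd \<nu> t n)"
    by (rule emeasure_fdd_Suc[OF K t0 B])
  also have "\<dots> = (\<integral>\<^sup>+x. 0 \<partial>fdd \<nu> t n)"
  proof (rule nn_integral_cong)
    fix x assume x: "x \<in> space (fdd \<nu> t n)"
    then have x': "x \<in> space (Pn n)" using fdd_sets[OF K t0] sets_eq_imp_space_eq by blast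
    then have xn: "x n \<ge> 0" by (auto simp: space_Pn)
    have "upd n x -` B \<inter> space S = {y \<in> space S. \<not> ((0 < x n \<longrightarrow> y < x n) \<and> (x n = 0 \<longrightarrow> y = 0))}"
      using upd_space[OF x'] by (auto simp: B_def upd_def space_S)
    then show "emeasure (\<nu> (x n)) (upd n x -` B \<inter> space S) = 0" using step_null[OF xn] by simp
  qed
  finally have z: "emeasure (fdd \<nu> t (Suc n)) B = 0" by simp
  show "AE \<omega> in P. (0 < \<omega> !! n \<longrightarrow> \<omega> !! Suc n < \<omega> !! n) \<and> (\<omega> !! n = 0 \<longrightarrow> \<omega> !! Suc n = 0)"
  proof (rule null_from_emeasure[OF P_set_sets[OF B]])
    show "emeasure P {\<omega>\<in>space P. (\<lambda>i\<in>{..Suc n}. \<omega> !! i) \<in> B} = 0"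
      using P_fdd[OF B] z by simp
    show "{\<omega> \<in> space P. \<not> ((0 < \<omega> !! n \<longrightarrow> \<omega> !! Suc n < \<omega> !! n) \<and> (\<omega> !! n = 0 \<longrightarrow> \<omega> !! Suc n = 0))}
        \<subseteq> {\<omega>\<in>space P. (\<lambda>i\<in>{..Suc n}. \<omega> !! i) \<in> B}"
      using proj_space by (auto simp: B_def P_space)
  qed
qed

lemma visits_Hf: "emeasure P (visits_eq t j) = Hf \<nu> j t"
proof -
  define E where "E = {x \<in> space (Pn (Suc j)). 0 < x j \<and> x (Suc j) = 0}"
  have E: "E \<in> sets (Pn (Suc j))" unfolding E_def by measurable
  have t0: "t \<in> {0..}" using t by simp
  have "emeasure P (visits_eq t j) = emeasure P {\<omega>\<in>space P. (\<lambda>i\<in>{..Suc j}. \<omega> !! i) \<in> E}"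
  proof (rule emeasure_eq_AE)
    show "visits_eq t j \<in> sets P" using P_sets by simp
    show "{\<omega>\<in>space P. (\<lambda>i\<in>{..Suc j}. \<omega> !! i) \<in> E} \<in> sets P" by (rule P_set_sets[OF E])
    show "AE \<omega> in P. (\<omega> \<in> visits_eq t j) = (\<omega> \<in> {\<omega> \<in> space P. (\<lambda>i\<in>{..Suc j}. \<omega> !! i) \<in> E})"
      using AE_start AE_good AE_space
    proof eventually_elim
      case (elim \<omega>)
      then have sp: "\<omega> \<in> streams {0..}" by (simp add: P_space)
      then have nn: "\<And>n. \<omega> !! n \<ge> 0" by (auto simp: streams_iff_snth)
      have "(finite {n. n \<ge> 1 \<and> \<omega> !! n \<in> {0<..<t}} \<and> card {n. n \<ge> 1 \<and> \<omega> !! n \<in> {0<..<t}} = j)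
          \<longleftrightarrow> (0 < \<omega> !! j \<and> \<omega> !! (Suc j) = 0)"
        by (rule path_lemma[of "\<lambda>n. \<omega> !! n"]) (use elim nn t in auto)
      then show ?case using sp proj_space[OF sp, of "Suc j"] elim
        by (auto simp: visits_eq_def E_def)
    qed
  qed
  also have "\<dots> = emeasure (fdd \<nu> t (Suc j)) E" by (rule P_fdd[OF E])
  also have "\<dots> = Hf \<nu> j t" unfolding E_def by (rule E_event[OF K t0])
  finally show ?thesis .
qed

end

lemma Hf_Suc_form:
  assumes t: "t > 0" and IH: "\<And>y. y > 0 \<Longrightarrow> Hf \<nu> j y = ennreal (q_fun j y)"
  shows "Hf \<nu> (Suc j) t = (\<integral>\<^sup>+x. ennreal (indicator {0<..<t} x * q_fun j x) \<partial>\<nu> t)"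
proof -
  interpret N: prob_space "\<nu> t" using prob_nu[OF K] t by simp
  have "Hf \<nu> (Suc j) t = (\<integral>\<^sup>+y. Hf \<nu> j y \<partial>\<nu> t)" using H_Suc[OF K] t by simp
  also have "\<dots> = (\<integral>\<^sup>+x. ennreal (indicator {0<..<t} x * q_fun j x) \<partial>\<nu> t)"
  proof (rule nn_integral_cong_AE)
    have "{0..<t} \<in> N.events" using sets_nu[OF K] t by (auto simp: sets_S_iff)
    then have "AE x in \<nu> t. x \<in> {0..<t}" using nult[OF t] by (intro N.AE_prob_1) auto
    then show "AE x in \<nu> t. Hf \<nu> j x = ennreal (indicator {0<..<t} x * q_fun j x)"
    proof eventually_elim
      case (elim x)
      show ?case
      proof (cases "x = 0")
        case True then show ?thesis using Hf_at0[OF K nu0] by simp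
      next
        case False then show ?thesis using elim IH[of x] by auto
      qed
    qed
  qed
  finally show ?thesis .
qed

lemma Hf_0_form: "t > 0 \<Longrightarrow> Hf \<nu> 0 t = emeasure (\<nu> t) {0}"
  using H_0[OF K, of t] by (simp add: gz_def[OF K] indicator_def)

end

definition cons :: "nat \<Rightarrow> real \<Rightarrow> (nat \<Rightarrow> real) \<Rightarrow> (nat \<Rightarrow> real)" where
  "cons n t y = (\<lambda>i\<in>{..Suc n}. if i = 0 then t else y (i - 1))"

lemma cons_meas: "t \<in> {0..} \<Longrightarrow> cons n t \<in> Pn n \<rightarrow>\<^sub>M Pn (Suc n)"
  unfolding cons_def Pn_def[of "Suc n"]
proof (rule measurable_restrict)
  fix i assume t: "t \<in> {0..}" and i: "i \<in> {..Suc n}"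
  show "(\<lambda>y. if i = 0 then t else y (i - 1)) \<in> Pn n \<rightarrow>\<^sub>M S"
  proof (cases "i = 0")
    case True then show ?thesis using t by (simp add: space_S)
  next
    case False then show ?thesis using i by (simp add: comp_meas)
  qed
qed

lemma restrict0_meas: "(\<lambda>s. \<lambda>i\<in>{..0::nat}. s) \<in> S \<rightarrow>\<^sub>M Pn 0"
  unfolding Pn_def by (rule measurable_restrict) simp

context
  fixes \<nu> :: "real \<Rightarrow> real measure"
  assumes K: "\<nu> \<in> S \<rightarrow>\<^sub>M prob_algebra S"
begin

lemma fdd_meas: "(\<lambda>s. fdd \<nu> s n) \<in> S \<rightarrow>\<^sub>M prob_algebra (Pn n)"
proof (induction n)
  case 0
  show ?case unfolding fdd_0'
    by (rule measurable_compose[OF restrict0_meas measurable_return_prob_space])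
next
  case (Suc n)
  show ?case unfolding fdd_Suc'
    by (rule measurable_bind_prob_space[OF Suc Kn_meas[OF K]])
qed

lemma fdd_front:
  assumes t: "t \<in> {0..}"
  shows "fdd \<nu> t (Suc n) = \<nu> t \<bind> (\<lambda>s. distr (fdd \<nu> s n) (Pn (Suc n)) (cons n t))"
  using t
proof (induction n arbitrary: t)
  case 0
  have x0: "(\<lambda>i\<in>{..0::nat}. t) \<in> space (Pn 0)" using 0 by (simp add: space_Pn)
  have sne: "space (\<nu> t) \<noteq> {}" using prob_nu[OF K 0] prob_space.not_empty by blast
  have sp: "space (\<nu> t) = space S" using sets_eq_imp_space_eq[OF sets_nu[OF K 0]] .
  have "fdd \<nu> t (Suc 0) = Kn \<nu> 0 (\<lambda>i\<in>{..0}. t)"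
    unfolding fdd_Suc' fdd_0' by (rule bind_return[OF Kn_sub[OF K] x0])
  also have "\<dots> = distr (\<nu> t) (Pn 1) (\<lambda>s. cons 0 t (\<lambda>i\<in>{..0}. s))"
    unfolding Kn_def
  proof (intro distr_cong)
    fix s assume "s \<in> space (\<nu> ((\<lambda>i\<in>{..0::nat}. t) 0))"
    show "upd 0 (\<lambda>i\<in>{..0}. t) s = cons 0 t (\<lambda>i\<in>{..0}. s)"
      by (auto simp: upd_def cons_def fun_eq_iff)
  qed simp_all
  also have "\<dots> = \<nu> t \<bind> (\<lambda>s. return (Pn 1) (cons 0 t (\<lambda>i\<in>{..0}. s)))"
  proof (rule bind_return_distr'[symmetric, OF sne])
    show "(\<lambda>s. cons 0 t (\<lambda>i\<in>{..0::nat}. s)) \<in> \<nu> t \<rightarrow>\<^sub>M Pn 1"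
      using meas_sets_trans[OF sets_nu[OF K 0] measurable_compose[OF restrict0_meas cons_meas[OF 0]]] by simp
  qed
  also have "\<dots> = \<nu> t \<bind> (\<lambda>s. distr (fdd \<nu> s 0) (Pn (Suc 0)) (cons 0 t))"
  proof (rule bind_cong[OF refl])
    fix s assume "s \<in> space (\<nu> t)"
    then have "(\<lambda>i\<in>{..0::nat}. s) \<in> space (Pn 0)" using sp by (simp add: space_Pn space_S)
    then show "return (Pn 1) (cons 0 t (\<lambda>i\<in>{..0}. s)) = distr (fdd \<nu> s 0) (Pn (Suc 0)) (cons 0 t)"
      unfolding fdd_0' by (subst distr_return[OF cons_meas[OF 0]]) auto
  qed
  finally show ?case by simp
next
  case (Suc n)
  have t: "t \<in> {0..}" by fact
  have dm: "(\<lambda>s. distr (fdd \<nu> s n) (Pn (Suc n)) (cons n t)) \<in> S \<rightarrow>\<^sub>M prob_algebra (Pn (Suc n))"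
    by (rule measurable_compose[OF fdd_meas measurable_distr_prob_space[OF cons_meas[OF t]]])
  have "fdd \<nu> t (Suc (Suc n)) = (\<nu> t \<bind> (\<lambda>s. distr (fdd \<nu> s n) (Pn (Suc n)) (cons n t))) \<bind> Kn \<nu> (Suc n)"
    using Suc.IH[OF t] by (simp only: fdd_Suc'[of \<nu> t "Suc n"])
  also have "\<dots> = \<nu> t \<bind> (\<lambda>s. distr (fdd \<nu> s n) (Pn (Suc n)) (cons n t) \<bind> Kn \<nu> (Suc n))"
    by (rule bind_assoc[OF meas_sets_trans[OF sets_nu[OF K t] measurable_prob_algebraD[OF dm]] Kn_sub[OF K]])
  also have "\<dots> = \<nu> t \<bind> (\<lambda>s. distr (fdd \<nu> s (Suc n)) (Pn (Suc (Suc n))) (cons (Suc n) t))"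
  proof (rule bind_cong[OF refl])
    fix s assume "s \<in> space (\<nu> t)"
    then have s: "s \<in> {0..}" using sets_eq_imp_space_eq[OF sets_nu[OF K t]] by (simp add: space_S)
    have fs: "sets (fdd \<nu> s n) = sets (Pn n)" by (rule fdd_sets[OF K s])
    have "distr (fdd \<nu> s n) (Pn (Suc n)) (cons n t) \<bind> Kn \<nu> (Suc n)
        = fdd \<nu> s n \<bind> (\<lambda>y. Kn \<nu> (Suc n) (cons n t y))"
      by (rule bind_distr[OF meas_sets_trans[OF fs cons_meas[OF t]] Kn_sub[OF K] fdd_space_ne[OF K s]])
    also have "\<dots> = fdd \<nu> s n \<bind> (\<lambda>y. distr (Kn \<nu> n y) (Pn (Suc (Suc n))) (cons (Suc n) t))"
    proof (rule bind_cong[OF refl])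
      fix y assume "y \<in> space (fdd \<nu> s n)"
      then have y: "y \<in> space (Pn n)" using sets_eq_imp_space_eq[OF fs] by simp
      then have yn: "y n \<in> {0..}" by (auto simp: space_Pn)
      have um: "upd n y \<in> \<nu> (y n) \<rightarrow>\<^sub>M Pn (Suc n)"
        using meas_sets_trans[OF sets_nu[OF K yn] measurable_Pair2[OF upd_meas y]] by simp
      have "distr (Kn \<nu> n y) (Pn (Suc (Suc n))) (cons (Suc n) t)
          = distr (\<nu> (y n)) (Pn (Suc (Suc n))) (cons (Suc n) t \<circ> upd n y)"
        unfolding Kn_def by (rule distr_distr[OF cons_meas[OF t] um])
      also have "\<dots> = Kn \<nu> (Suc n) (cons n t y)"
        unfolding Kn_def
      proof (rule distr_cong)
        show "\<nu> (y n) = \<nu> (cons n t y (Suc n))" by (simp add: cons_def)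
        fix z assume "z \<in> space (\<nu> (y n))"
        show "(cons (Suc n) t \<circ> upd n y) z = upd (Suc n) (cons n t y) z"
          by (auto simp: cons_def upd_def fun_eq_iff)
      qed simp
      finally show "Kn \<nu> (Suc n) (cons n t y) = distr (Kn \<nu> n y) (Pn (Suc (Suc n))) (cons (Suc n) t)" by simp
    qed
    also have "\<dots> = distr (fdd \<nu> s n \<bind> Kn \<nu> n) (Pn (Suc (Suc n))) (cons (Suc n) t)"
      by (rule distr_bind[symmetric, OF meas_sets_trans[OF fs Kn_sub[OF K]] fdd_space_ne[OF K s] cons_meas[OF t]])
    also have "\<dots> = distr (fdd \<nu> s (Suc n)) (Pn (Suc (Suc n))) (cons (Suc n) t)"
      by (simp only: fdd_Suc')
    finally show "distr (fdd \<nu> s n) (Pn (Suc n)) (cons n t) \<bind> Kn \<nu> (Suc n)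
        = distr (fdd \<nu> s (Suc n)) (Pn (Suc (Suc n))) (cons (Suc n) t)" .
  qed
  finally show ?case .
qed

end

lemma proj_meas': "(\<lambda>\<omega>. \<lambda>i\<in>{..n}. \<omega> !! i) \<in> stream_space S \<rightarrow>\<^sub>M Pn n"
  unfolding Pn_def by (rule measurable_restrict) simp

primrec xs :: "real \<Rightarrow> (real \<times> real) stream \<Rightarrow> nat \<Rightarrow> real" where
  "xs t \<omega> 0 = t"
| "xs t \<omega> (Suc n) = fk (xs t \<omega> n) (\<omega> !! n)"

definition cpath :: "real \<Rightarrow> (real \<times> real) stream \<Rightarrow> real stream" where
  "cpath t \<omega> = to_stream (xs t \<omega>)"

definition SB :: "(real \<times> real) stream measure" where "SB = stream_space Bm"

definition Pt :: "real \<Rightarrow> real stream measure" where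
  "Pt t = distr SB (stream_space S) (cpath t)"

lemma cpath_snth[simp]: "cpath t \<omega> !! n = xs t \<omega> n"
  by (simp add: cpath_def to_stream_def)

lemma xs_front: "xs t \<omega> (Suc n) = xs (fk t (shd \<omega>)) (stl \<omega>) n"
  by (induction n) auto

lemma prob_SB: "prob_space SB"
  unfolding SB_def by (rule prob_space.prob_space_stream_space[OF prob_Bm])

lemma xs_meas: assumes t: "t \<in> {0..}" shows "(\<lambda>\<omega>. xs t \<omega> n) \<in> SB \<rightarrow>\<^sub>M S"
proof (induction n)
  case 0 then show ?case using t by (simp add: space_S)
next
  case (Suc n)
  have "(\<lambda>\<omega>. (xs t \<omega> n, \<omega> !! n)) \<in> SB \<rightarrow>\<^sub>M S \<Otimes>\<^sub>M Bm"
    unfolding SB_def by (rule measurable_Pair[OF Suc[unfolded SB_def] measurable_snth])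
  from measurable_compose[OF this fk_meas] show ?case by simp
qed

lemma cpath_meas: "t \<in> {0..} \<Longrightarrow> cpath t \<in> SB \<rightarrow>\<^sub>M stream_space S"
  by (rule measurable_stream_space2) (simp add: xs_meas)

lemma Yf_meas: "t \<in> {0..} \<Longrightarrow> (\<lambda>\<omega>. \<lambda>i\<in>{..n}. xs t \<omega> i) \<in> SB \<rightarrow>\<^sub>M Pn n"
  unfolding Pn_def by (rule measurable_restrict) (simp add: xs_meas)

lemma emeasure_distr_nn:
  assumes "f \<in> M \<rightarrow>\<^sub>M N" "A \<in> sets N"
  shows "emeasure (distr M N f) A = (\<integral>\<^sup>+x. indicator A (f x) \<partial>M)"
proof -
  have "emeasure (distr M N f) A = (\<integral>\<^sup>+y. indicator A y \<partial>distr M N f)"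
    using assms by (simp add: nn_integral_indicator)
  also have "\<dots> = (\<integral>\<^sup>+x. indicator A (f x) \<partial>M)"
    using assms by (intro nn_integral_distr) auto
  finally show ?thesis .
qed

lemma K_mu: "mu \<in> S \<rightarrow>\<^sub>M prob_algebra S"
  using markov_mu by (simp add: markov_kernel_def)

lemma Y_eq: "t \<in> {0..} \<Longrightarrow> distr SB (Pn n) (\<lambda>\<omega>. \<lambda>i\<in>{..n}. xs t \<omega> i) = fdd mu t n"
proof (induction n arbitrary: t)
  case 0
  interpret SB: prob_space SB by (rule prob_SB)
  have eq: "(\<lambda>\<omega>. \<lambda>i\<in>{..0::nat}. xs t \<omega> i) = (\<lambda>\<omega>. \<lambda>i\<in>{..0}. t)" by (auto simp: fun_eq_iff)
  have "(\<lambda>i\<in>{..0::nat}. t) \<in> space (Pn 0)" using 0 by (simp add: space_Pn)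
  then show ?case unfolding fdd_0' eq by (rule SB.distr_const)
next
  case (Suc n)
  have t: "t \<in> {0..}" by fact
  interpret B: prob_space Bm by (rule prob_Bm)
  define N where "N s = distr (fdd mu s n) (Pn (Suc n)) (cons n t)" for s
  have dm: "N \<in> S \<rightarrow>\<^sub>M prob_algebra (Pn (Suc n))"
    unfolding N_def[abs_def]
    by (rule measurable_compose[OF fdd_meas[OF K_mu] measurable_distr_prob_space[OF cons_meas[OF t]]])
  show ?case
  proof (rule measure_eqI)
    show "sets (distr SB (Pn (Suc n)) (\<lambda>\<omega>. \<lambda>i\<in>{..Suc n}. xs t \<omega> i)) = sets (fdd mu t (Suc n))"
      by (simp only: sets_distr fdd_sets[OF K_mu t])
    fix A assume "A \<in> sets (distr SB (Pn (Suc n)) (\<lambda>\<omega>. \<lambda>i\<in>{..Suc n}. xs t \<omega> i))"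
    then have A[measurable]: "A \<in> sets (Pn (Suc n))" by simp
    have hm: "(\<lambda>s. emeasure (N s) A) \<in> borel_measurable S"
      by (rule measurable_compose[OF measurable_prob_algebraD[OF dm] measurable_emeasure_subprob_algebra[OF A]])
    have front: "(\<lambda>i\<in>{..Suc n}. xs t (w ## \<omega>') i) = cons n t (\<lambda>i\<in>{..n}. xs (fk t w) \<omega>' i)" for w \<omega>'
    proof (rule ext)
      fix i show "(\<lambda>i\<in>{..Suc n}. xs t (w ## \<omega>') i) i = cons n t (\<lambda>i\<in>{..n}. xs (fk t w) \<omega>' i) i"
        by (cases i) (auto simp: cons_def xs_front simp del: xs.simps(2))
    qed
    have "emeasure (distr SB (Pn (Suc n)) (\<lambda>\<omega>. \<lambda>i\<in>{..Suc n}. xs t \<omega> i)) A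
        = (\<integral>\<^sup>+\<omega>. indicator A (\<lambda>i\<in>{..Suc n}. xs t \<omega> i) \<partial>SB)"
      by (rule emeasure_distr_nn[OF Yf_meas[OF t] A])
    also have "\<dots> = (\<integral>\<^sup>+w. (\<integral>\<^sup>+\<omega>'. indicator A (\<lambda>i\<in>{..Suc n}. xs t (w ## \<omega>') i) \<partial>SB) \<partial>Bm)"
    proof -
      have "(\<lambda>\<omega>. indicator A (\<lambda>i\<in>{..Suc n}. xs t \<omega> i) :: ennreal) \<in> borel_measurable (stream_space Bm)"
        using Yf_meas[OF t, of "Suc n"] unfolding SB_def by measurable
      then show ?thesis unfolding SB_def by (rule B.nn_integral_stream_space)
    qed
    also have "\<dots> = (\<integral>\<^sup>+w. emeasure (N (fk t w)) A \<partial>Bm)"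
    proof (rule nn_integral_cong)
      fix w assume "w \<in> space Bm"
      have ft: "fk t w \<in> {0..}" by (simp add: fk_def)
      have "(\<integral>\<^sup>+\<omega>'. indicator A (\<lambda>i\<in>{..Suc n}. xs t (w ## \<omega>') i) \<partial>SB)
          = (\<integral>\<^sup>+\<omega>'. indicator A (cons n t (\<lambda>i\<in>{..n}. xs (fk t w) \<omega>' i)) \<partial>SB)"
        by (simp add: front)
      also have "\<dots> = emeasure (distr SB (Pn (Suc n)) (cons n t \<circ> (\<lambda>\<omega>'. \<lambda>i\<in>{..n}. xs (fk t w) \<omega>' i))) A"
        using emeasure_distr_nn[OF measurable_comp[OF Yf_meas[OF ft] cons_meas[OF t]] A] by (simp add: comp_def)
      also have "distr SB (Pn (Suc n)) (cons n t \<circ> (\<lambda>\<omega>'. \<lambda>i\<in>{..n}. xs (fk t w) \<omega>' i))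
          = distr (distr SB (Pn n) (\<lambda>\<omega>'. \<lambda>i\<in>{..n}. xs (fk t w) \<omega>' i)) (Pn (Suc n)) (cons n t)"
        by (rule distr_distr[symmetric, OF cons_meas[OF t] Yf_meas[OF ft]])
      also have "\<dots> = N (fk t w)" by (simp add: Suc.IH[OF ft] N_def)
      finally show "(\<integral>\<^sup>+\<omega>'. indicator A (\<lambda>i\<in>{..Suc n}. xs t (w ## \<omega>') i) \<partial>SB) = emeasure (N (fk t w)) A" .
    qed
    also have "\<dots> = (\<integral>\<^sup>+s. emeasure (N s) A \<partial>mu t)"
      unfolding mu_def by (subst nn_integral_distr) (simp_all add: fk_meas1 hm)
    also have "\<dots> = emeasure (mu t \<bind> N) A"
      by (rule emeasure_bind_prob_algebra[symmetric, OF nu_space[OF K_mu t] dm A])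
    also have "mu t \<bind> N = fdd mu t (Suc n)"
      unfolding N_def by (rule fdd_front[symmetric, OF K_mu t])
    finally show "emeasure (distr SB (Pn (Suc n)) (\<lambda>\<omega>. \<lambda>i\<in>{..Suc n}. xs t \<omega> i)) A = emeasure (fdd mu t (Suc n)) A" .
  qed
qed

lemma chain_mu: "t \<in> {0..} \<Longrightarrow> chain_law mu t (Pt t)"
proof -
  assume t: "t \<in> {0..}"
  have "distr (Pt t) (\<Pi>\<^sub>M i\<in>{..n}. S) (\<lambda>\<omega>. \<lambda>i\<in>{..n}. \<omega> !! i) = fdd mu t n" for n
  proof -
    have "distr (Pt t) (\<Pi>\<^sub>M i\<in>{..n}. S) (\<lambda>\<omega>. \<lambda>i\<in>{..n}. \<omega> !! i)
        = distr SB (Pn n) ((\<lambda>\<omega>. \<lambda>i\<in>{..n}. \<omega> !! i) \<circ> cpath t)"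
      unfolding Pt_def Pn_def[symmetric] by (rule distr_distr[OF proj_meas' cpath_meas[OF t]])
    also have "(\<lambda>\<omega>. \<lambda>i\<in>{..n}. \<omega> !! i) \<circ> cpath t = (\<lambda>\<omega>. \<lambda>i\<in>{..n}. xs t \<omega> i)"
      by (simp add: comp_def restrict_def fun_eq_iff)
    also have "distr SB (Pn n) (\<lambda>\<omega>. \<lambda>i\<in>{..n}. xs t \<omega> i) = fdd mu t n" by (rule Y_eq[OF t])
    finally show ?thesis .
  qed
  moreover have "prob_space (Pt t)"
    unfolding Pt_def by (rule prob_space.prob_space_distr[OF prob_SB cpath_meas[OF t]])
  ultimately show ?thesis unfolding chain_law_def by (simp add: Pt_def)
qed

lemma Hf_mu: "t > 0 \<Longrightarrow> Hf mu j t = ennreal (q_fun j t)"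
proof (induction j arbitrary: t)
  case 0
  interpret N: prob_space "mu t" by (rule prob_mu)
  show ?case using Hf_0_form[OF K_mu mu_0 mu_lt 0] mu_atom[OF 0] by (simp add: N.emeasure_eq_measure)
next
  case (Suc j)
  show ?case using Hf_Suc_form[OF K_mu mu_0 mu_lt Suc.prems Suc.IH] mu_int[OF Suc.prems] by simp
qed

lemma existence:
  "markov_kernel mu \<and> measure (mu 0) {0} = 1 \<and> (\<forall>t>0. measure (mu t) {0..<t} = 1) \<and>
   (\<forall>t>0. \<exists>P. chain_law mu t P \<and> (\<forall>j. measure P (visits_eq t j) = q_fun j t))"
proof (intro conjI allI impI)
  show "markov_kernel mu" by (rule markov_mu)
  show "measure (mu 0) {0} = 1" by (rule mu_0)
  fix t :: real assume t: "t > 0"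
  show "measure (mu t) {0..<t} = 1" by (rule mu_lt[OF t])
  have CL: "chain_law mu t (Pt t)" using t by (intro chain_mu) simp
  have "\<forall>j. measure (Pt t) (visits_eq t j) = q_fun j t"
  proof
    fix j
    have "emeasure (Pt t) (visits_eq t j) = ennreal (q_fun j t)"
      using visits_Hf[OF K_mu mu_0 mu_lt t CL] Hf_mu[OF t] by simp
    then show "measure (Pt t) (visits_eq t j) = q_fun j t"
      using q_nonneg[of t j] t by (simp add: measure_def)
  qed
  with CL show "\<exists>P. chain_law mu t P \<and> (\<forall>j. measure P (visits_eq t j) = q_fun j t)" by blast
qed

lemma suminf_swap_ennreal: "(\<Sum>m. \<Sum>n. f m n :: ennreal) = (\<Sum>n. \<Sum>m. f m n)"
proof -
  interpret pair_sigma_finite "count_space (UNIV::nat set)" "count_space (UNIV::nat set)"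
    by (intro pair_sigma_finite.intro sigma_finite_measure_count_space_countable) auto
  have m: "(\<lambda>(x, y). f x y) \<in> borel_measurable (count_space UNIV \<Otimes>\<^sub>M count_space UNIV)"
    by (subst pair_measure_countable) auto
  have "(\<Sum>m. \<Sum>n. f m n) = (\<integral>\<^sup>+m. \<integral>\<^sup>+n. f m n \<partial>count_space UNIV \<partial>count_space UNIV)"
    by (simp add: nn_integral_count_space_nat)
  also have "\<dots> = (\<integral>\<^sup>+n. \<integral>\<^sup>+m. f m n \<partial>count_space UNIV \<partial>count_space UNIV)"
    by (rule Fubini'[OF m, symmetric])
  also have "\<dots> = (\<Sum>n. \<Sum>m. f m n)"
    by (simp add: nn_integral_count_space_nat)
  finally show ?thesis .
qed

definition cf' :: "nat \<Rightarrow> nat \<Rightarrow> real" where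
  "cf' j k = real (stirling k j) / fact k"

lemma cf'_nonneg: "cf' j k \<ge> 0" by (simp add: cf'_def)

lemma cf'_zero: "k < j \<Longrightarrow> cf' j k = 0" by (simp add: cf'_def)

lemma sum_cf'_poch: "(\<Sum>j\<le>k. cf' j k * y^j) = pochhammer y k / fact k"
proof -
  have "(\<Sum>j\<le>k. cf' j k * y^j) = (\<Sum>j\<le>k. of_nat (stirling k j) * y^j) / fact k"
    by (simp add: cf'_def sum_divide_distrib)
  also have "\<dots> = pochhammer y k / fact k" by (simp add: stirling_pochhammer)
  finally show ?thesis .
qed

lemma poch_nn: "pochhammer (real n) k \<ge> 0"
  unfolding pochhammer_prod by (intro prod_nonneg) auto

lemma poch_bound: "pochhammer (real n) k \<le> real n ^ k * fact k"
proof (induction k)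
  case (Suc k)
  have "pochhammer (real n) (Suc k) = pochhammer (real n) k * (real n + real k)"
    by (simp add: pochhammer_Suc)
  also have "\<dots> \<le> (real n ^ k * fact k) * (real n + real k)"
    by (intro mult_right_mono Suc) auto
  also have "\<dots> \<le> (real n ^ k * fact k) * (real n * (real k + 1))"
  proof (cases "n = 0")
    case True then show ?thesis by (cases k) auto
  next
    case False
    then have "1 \<le> real n" by simp
    then have "real k * 1 \<le> real k * real n" by (intro mult_left_mono) auto
    then have "real n + real k \<le> real n * (real k + 1)"
      by (simp add: algebra_simps)
    then show ?thesis by (intro mult_left_mono) auto
  qed
  also have "\<dots> = real n ^ Suc k * fact (Suc k)" by (simp add: algebra_simps)
  finally show ?case .
qed simp

lemma seq_unique:
  fixes A B :: "nat \<Rightarrow> real" and t :: real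
  assumes t: "t \<ge> 0"
    and A0: "\<And>k. A k \<ge> 0" and B0: "\<And>k. B k \<ge> 0"
    and Ab: "\<And>k. A k \<le> t^k / fact k" and Bb: "\<And>k. B k \<le> t^k / fact k"
    and eq: "\<And>j. (\<Sum>k. ennreal (cf' j k * A k)) = (\<Sum>k. ennreal (cf' j k * B k))"
  shows "A = B"
proof -
  define ev where "ev n k = (\<Sum>j\<le>k. (if even j then real n ^ j else 0) * cf' j k)" for n k
  define od where "od n k = (\<Sum>j\<le>k. (if odd j then real n ^ j else 0) * cf' j k)" for n k
  have ev0: "ev n k \<ge> 0" for n k unfolding ev_def by (intro sum_nonneg) (auto simp: cf'_nonneg)
  have od0: "od n k \<ge> 0" for n k unfolding od_def by (intro sum_nonneg) (auto simp: cf'_nonneg)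
  have evod: "ev n k + od n k = pochhammer (real n) k / fact k" for n k
  proof -
    have "ev n k + od n k = (\<Sum>j\<le>k. cf' j k * real n ^ j)"
      unfolding ev_def od_def sum.distrib[symmetric] by (intro sum.cong) auto
    then show ?thesis by (simp add: sum_cf'_poch)
  qed
  have evmod: "ev n k - od n k = pochhammer (- real n) k / fact k" for n k
  proof -
    have "ev n k - od n k = (\<Sum>j\<le>k. cf' j k * (- real n) ^ j)"
      unfolding ev_def od_def sum_subtractf[symmetric] by (intro sum.cong) (auto simp: power_minus')
    then show ?thesis by (simp add: sum_cf'_poch)
  qed
  have summ: "summable (\<lambda>k. X k * (pochhammer (real n) k / fact k))"
    if X0: "\<And>k. X k \<ge> 0" and Xb: "\<And>k. X k \<le> t^k / fact k" for X :: "nat \<Rightarrow> real" and n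
  proof (rule summable_comparison_test')
    show "summable (\<lambda>k. inverse (fact k) * (real n * t) ^ k)" by (rule summable_exp)
    fix k
    have "norm (X k * (pochhammer (real n) k / fact k)) = X k * (pochhammer (real n) k / fact k)"
      using X0[of k] by (simp add: poch_nn)
    also have "\<dots> \<le> (t^k / fact k) * (real n ^ k)"
      using X0[of k] Xb[of k] poch_bound[of n k] t
      by (intro mult_mono) (auto simp: field_simps poch_nn)
    also have "\<dots> = inverse (fact k) * (real n * t) ^ k" by (simp add: field_simps power_mult_distrib)
    finally show "norm (X k * (pochhammer (real n) k / fact k)) \<le> inverse (fact k) * (real n * t) ^ k" .
  qed
  have key: "(\<Sum>j. ennreal (w j) * (\<Sum>k. ennreal (cf' j k * X k)))
      = (\<Sum>k. ennreal (X k * (\<Sum>j\<le>k. w j * cf' j k)))"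
    if w0: "\<And>j. w j \<ge> 0" and X0: "\<And>k. X k \<ge> 0" for w :: "nat \<Rightarrow> real" and X :: "nat \<Rightarrow> real"
  proof -
    have "(\<Sum>j. ennreal (w j) * (\<Sum>k. ennreal (cf' j k * X k))) = (\<Sum>j. \<Sum>k. ennreal (w j * cf' j k * X k))"
    proof (rule suminf_cong)
      fix j
      have "ennreal (w j) * (\<Sum>k. ennreal (cf' j k * X k)) = (\<Sum>k. ennreal (w j) * ennreal (cf' j k * X k))"
        by (rule ennreal_suminf_cmult[symmetric])
      also have "\<dots> = (\<Sum>k. ennreal (w j * cf' j k * X k))"
        using w0[of j] by (simp add: ennreal_mult'[symmetric] mult.assoc)
      finally show "ennreal (w j) * (\<Sum>k. ennreal (cf' j k * X k)) = (\<Sum>k. ennreal (w j * cf' j k * X k))" .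
    qed
    also have "\<dots> = (\<Sum>k. \<Sum>j. ennreal (w j * cf' j k * X k))" by (rule suminf_swap_ennreal)
    also have "\<dots> = (\<Sum>k. ennreal (X k * (\<Sum>j\<le>k. w j * cf' j k)))"
    proof (rule suminf_cong)
      fix k
      have "(\<Sum>j. ennreal (w j * cf' j k * X k)) = (\<Sum>j\<le>k. ennreal (w j * cf' j k * X k))"
        by (rule suminf_finite) (auto simp: cf'_zero)
      also have "\<dots> = ennreal (\<Sum>j\<le>k. w j * cf' j k * X k)"
        using w0 X0 by (intro sum_ennreal) (auto simp: cf'_nonneg)
      also have "(\<Sum>j\<le>k. w j * cf' j k * X k) = X k * (\<Sum>j\<le>k. w j * cf' j k)"
        by (simp add: sum_distrib_left algebra_simps)
      finally show "(\<Sum>j. ennreal (w j * cf' j k * X k)) = ennreal (X k * (\<Sum>j\<le>k. w j * cf' j k))" .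
    qed
    finally show ?thesis .
  qed
  have sev: "summable (\<lambda>k. Z k * ev n k)" if Z0: "\<And>k. Z k \<ge> 0" and Zb: "\<And>k. Z k \<le> t^k / fact k" for Z n
  proof (rule summable_comparison_test'[OF summ[OF Z0 Zb, of n]])
    fix k
    have le: "ev n k \<le> pochhammer (real n) k / fact k" using evod[of n k] ev0[of n k] od0[of n k] by linarith
    have "norm (Z k * ev n k) = Z k * ev n k" using Z0[of k] ev0[of n k] by simp
    also have "\<dots> \<le> Z k * (pochhammer (real n) k / fact k)" by (rule mult_left_mono[OF le Z0])
    finally show "norm (Z k * ev n k) \<le> Z k * (pochhammer (real n) k / fact k)" .
  qed
  have sod: "summable (\<lambda>k. Z k * od n k)" if Z0: "\<And>k. Z k \<ge> 0" and Zb: "\<And>k. Z k \<le> t^k / fact k" for Z n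
  proof (rule summable_comparison_test'[OF summ[OF Z0 Zb, of n]])
    fix k
    have le: "od n k \<le> pochhammer (real n) k / fact k" using evod[of n k] ev0[of n k] od0[of n k] by linarith
    have "norm (Z k * od n k) = Z k * od n k" using Z0[of k] od0[of n k] by simp
    also have "\<dots> \<le> Z k * (pochhammer (real n) k / fact k)" by (rule mult_left_mono[OF le Z0])
    finally show "norm (Z k * od n k) \<le> Z k * (pochhammer (real n) k / fact k)" .
  qed
  have real_eq_summ: "summable (\<lambda>k. Z k * ev n k) \<and> summable (\<lambda>k. Z k * od n k)"
    if Z0: "\<And>k. Z k \<ge> 0" and Zb: "\<And>k. Z k \<le> t^k / fact k" for Z n
    using sev[OF Z0 Zb] sod[OF Z0 Zb] by blast
  have real_eq: "(\<Sum>k. X k * ev n k) = (\<Sum>k. Y k * ev n k) \<and> (\<Sum>k. X k * od n k) = (\<Sum>k. Y k * od n k)"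
    if X0: "\<And>k. X k \<ge> 0" and Xb: "\<And>k. X k \<le> t^k / fact k"
      and Y0: "\<And>k. Y k \<ge> 0" and Yb: "\<And>k. Y k \<le> t^k / fact k"
      and XY: "\<And>j. (\<Sum>k. ennreal (cf' j k * X k)) = (\<Sum>k. ennreal (cf' j k * Y k))"
    for X Y :: "nat \<Rightarrow> real" and n
  proof -
    have e1: "(\<Sum>k. ennreal (Z k * ev n k)) = (\<Sum>j. ennreal (if even j then real n ^ j else 0) * (\<Sum>k. ennreal (cf' j k * Z k)))"
      if "\<And>k. Z k \<ge> 0" for Z
      using key[of "\<lambda>j. if even j then real n ^ j else 0" Z] that by (simp add: ev_def)
    have o1: "(\<Sum>k. ennreal (Z k * od n k)) = (\<Sum>j. ennreal (if odd j then real n ^ j else 0) * (\<Sum>k. ennreal (cf' j k * Z k)))"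
      if "\<And>k. Z k \<ge> 0" for Z
      using key[of "\<lambda>j. if odd j then real n ^ j else 0" Z] that by (simp add: od_def)
    have "ennreal (\<Sum>k. X k * ev n k) = ennreal (\<Sum>k. Y k * ev n k)"
    proof -
      have "ennreal (\<Sum>k. X k * ev n k) = (\<Sum>k. ennreal (X k * ev n k))"
        by (rule suminf_ennreal2[symmetric]) (use X0 ev0 sev[OF X0 Xb] in auto)
      also have "\<dots> = (\<Sum>j. ennreal (if even j then real n ^ j else 0) * (\<Sum>k. ennreal (cf' j k * X k)))"
        by (rule e1[OF X0])
      also have "\<dots> = (\<Sum>j. ennreal (if even j then real n ^ j else 0) * (\<Sum>k. ennreal (cf' j k * Y k)))"
        using XY by simp
      also have "\<dots> = (\<Sum>k. ennreal (Y k * ev n k))"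
        by (rule e1[OF Y0, symmetric])
      also have "\<dots> = ennreal (\<Sum>k. Y k * ev n k)"
        by (rule suminf_ennreal2) (use Y0 ev0 sev[OF Y0 Yb] in auto)
      finally show ?thesis .
    qed
    moreover have "ennreal (\<Sum>k. X k * od n k) = ennreal (\<Sum>k. Y k * od n k)"
    proof -
      have "ennreal (\<Sum>k. X k * od n k) = (\<Sum>k. ennreal (X k * od n k))"
        by (rule suminf_ennreal2[symmetric]) (use X0 od0 sod[OF X0 Xb] in auto)
      also have "\<dots> = (\<Sum>j. ennreal (if odd j then real n ^ j else 0) * (\<Sum>k. ennreal (cf' j k * X k)))"
        by (rule o1[OF X0])
      also have "\<dots> = (\<Sum>j. ennreal (if odd j then real n ^ j else 0) * (\<Sum>k. ennreal (cf' j k * Y k)))"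
        using XY by simp
      also have "\<dots> = (\<Sum>k. ennreal (Y k * od n k))"
        by (rule o1[OF Y0, symmetric])
      also have "\<dots> = ennreal (\<Sum>k. Y k * od n k)"
        by (rule suminf_ennreal2) (use Y0 od0 sod[OF Y0 Yb] in auto)
      finally show ?thesis .
    qed
    moreover have "(\<Sum>k. X k * ev n k) \<ge> 0" "(\<Sum>k. Y k * ev n k) \<ge> 0" "(\<Sum>k. X k * od n k) \<ge> 0" "(\<Sum>k. Y k * od n k) \<ge> 0"
      using X0 Y0 ev0 od0 by (auto intro!: suminf_nonneg sev sod X0 Xb Y0 Yb)
    ultimately show ?thesis by simp
  qed
  have fin: "(\<Sum>k\<le>n. A k * (pochhammer (- real n) k / fact k)) = (\<Sum>k\<le>n. B k * (pochhammer (- real n) k / fact k))" for n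
  proof -
    have fs: "(\<Sum>k. X k * (pochhammer (- real n) k / fact k)) = (\<Sum>k\<le>n. X k * (pochhammer (- real n) k / fact k))" for X :: "nat \<Rightarrow> real"
      by (rule suminf_finite) (auto simp: pochhammer_of_nat_eq_0_iff)
    have sA: "summable (\<lambda>k. A k * ev n k)" "summable (\<lambda>k. A k * od n k)"
      and sB: "summable (\<lambda>k. B k * ev n k)" "summable (\<lambda>k. B k * od n k)"
      using real_eq_summ[OF A0 Ab] real_eq_summ[OF B0 Bb] by auto
    have "(\<Sum>k. A k * (pochhammer (- real n) k / fact k)) = (\<Sum>k. A k * ev n k) - (\<Sum>k. A k * od n k)"
      by (simp add: suminf_diff[OF sA, symmetric] evmod[symmetric] right_diff_distrib)
    also have "\<dots> = (\<Sum>k. B k * ev n k) - (\<Sum>k. B k * od n k)"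
      using real_eq[OF A0 Ab B0 Bb eq] by simp
    also have "\<dots> = (\<Sum>k. B k * (pochhammer (- real n) k / fact k))"
      by (simp add: suminf_diff[OF sB, symmetric] evmod[symmetric] right_diff_distrib)
    finally show ?thesis by (simp only: fs)
  qed
  have "A n = B n" for n
  proof (induction n rule: less_induct)
    case (less n)
    have "(\<Sum>k\<le>n. A k * (pochhammer (- real n) k / fact k)) = (\<Sum>k<n. A k * (pochhammer (- real n) k / fact k)) + A n * (pochhammer (- real n) n / fact n)"
      by (simp add: lessThan_Suc_atMost[symmetric])
    moreover have "(\<Sum>k\<le>n. B k * (pochhammer (- real n) k / fact k)) = (\<Sum>k<n. B k * (pochhammer (- real n) k / fact k)) + B n * (pochhammer (- real n) n / fact n)"
      by (simp add: lessThan_Suc_atMost[symmetric])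
    moreover have "(\<Sum>k<n. A k * (pochhammer (- real n) k / fact k)) = (\<Sum>k<n. B k * (pochhammer (- real n) k / fact k))"
      using less by simp
    ultimately have "A n * (pochhammer (- real n) n / fact n) = B n * (pochhammer (- real n) n / fact n)"
      using fin[of n] by simp
    moreover have "pochhammer (- real n) n \<noteq> 0" using pochhammer_of_nat_eq_0_iff[of n n] by simp
    ultimately show ?case by simp
  qed
  then show ?thesis by auto
qed

definition Sk :: "nat \<Rightarrow> real \<Rightarrow> real" where "Sk k x = (\<Sum>i\<le>k. x^i / fact i)"
definition Gk :: "nat \<Rightarrow> real \<Rightarrow> real" where "Gk k x = 1 - exp (- x) * Sk k x"
definition ak :: "nat \<Rightarrow> real \<Rightarrow> real" where "ak k x = Gk k x / x"

lemma Sk_0: "Sk k 0 = 1"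
  by (induction k) (auto simp: Sk_def)

lemma Gk_0: "Gk k 0 = 0" by (simp add: Gk_def Sk_0)

lemma Gk_Suc: "Gk (Suc k) x = Gk k x - exp (- x) * (x ^ Suc k / fact (Suc k))"
  by (simp add: Gk_def Sk_def algebra_simps)

lemma Gk_deriv: "((Gk k) has_real_derivative (exp (- x) * x^k / fact k)) (at x)"
proof (induction k)
  case 0
  have "Gk 0 = (\<lambda>x. 1 - exp (- x))" by (auto simp: fun_eq_iff Gk_def Sk_def)
  then show ?case by (auto intro!: derivative_eq_intros)
next
  case (Suc k)
  have eq: "Gk (Suc k) = (\<lambda>x. Gk k x - exp (- x) * (x ^ Suc k / fact (Suc k)))"
    by (auto simp: fun_eq_iff Gk_Suc)
  have d1: "DERIV (\<lambda>x. exp (- x)) x :> - exp (- x)"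
    by (auto intro!: derivative_eq_intros)
  have d2: "DERIV (\<lambda>x. x ^ Suc k / fact (Suc k)) x :> real (Suc k) * x ^ k / fact (Suc k)"
    using DERIV_cdivide[OF DERIV_pow[of "Suc k" x], of "fact (Suc k)"] by simp
  have d4: "DERIV (\<lambda>x. Gk k x - exp (- x) * (x ^ Suc k / fact (Suc k))) x :>
      exp (- x) * x^k / fact k - (- exp (- x) * (x ^ Suc k / fact (Suc k)) + real (Suc k) * x ^ k / fact (Suc k) * exp (- x))"
    by (rule DERIV_diff[OF Suc DERIV_mult[OF d1 d2]])
  have gen: "\<And>E P F (r::real) y. F \<noteq> 0 \<Longrightarrow> r \<noteq> 0 \<Longrightarrow>
      E * P / F - (- E * (y * P / (r * F)) + r * P / (r * F) * E) = E * (y * P) / (r * F)"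
    by (simp add: field_simps)
  have eqn: "exp (- x) * x^k / fact k - (- exp (- x) * (x ^ Suc k / fact (Suc k)) + real (Suc k) * x ^ k / fact (Suc k) * exp (- x))
      = exp (- x) * x ^ Suc k / fact (Suc k)"
    unfolding power_Suc fact_Suc[of k] of_nat_mult by (rule gen) auto
  show ?case unfolding eq using d4[unfolded eqn] .
qed

lemma Gk_has_integral:
  assumes x: "x \<ge> 0"
  shows "((\<lambda>u. exp (- u) * u^k / fact k) has_integral Gk k x) {0..x}"
proof -
  have "((\<lambda>u. exp (- u) * u^k / fact k) has_integral (Gk k x - Gk k 0)) {0..x}"
    by (rule fundamental_theorem_of_calculus)
       (use x in \<open>auto intro: Gk_deriv[THEN has_field_derivative_at_within] simp: has_real_derivative_iff_has_vector_derivative[symmetric]\<close>)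
  then show ?thesis by (simp add: Gk_0)
qed

lemma Gk_nn: "x \<ge> 0 \<Longrightarrow> Gk k x \<ge> 0"
  by (rule has_integral_nonneg[OF Gk_has_integral]) auto

lemma pow_has_integral:
  fixes x :: real
  assumes x: "x \<ge> 0"
  shows "((\<lambda>u. u^k / fact k) has_integral x ^ Suc k / fact (Suc k)) {0..x}"
proof -
  have "((\<lambda>u. u^k / fact k) has_integral (x ^ Suc k / fact (Suc k) - 0 ^ Suc k / fact (Suc k))) {0..x}"
  proof (rule fundamental_theorem_of_calculus[where a=0 and b=x and f="\<lambda>u. u ^ Suc k / fact (Suc k)" and f'="\<lambda>u. u^k / fact k"])
    show "0 \<le> x" by (rule x)
    fix u :: real
    have f: "real (Suc k) * u ^ k / fact (Suc k) = u^k / fact k"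
      by (simp add: fact_Suc[of k] del: fact_Suc)
    have "((\<lambda>u. u ^ Suc k / fact (Suc k)) has_real_derivative real (Suc k) * u ^ k / fact (Suc k)) (at u)"
      using DERIV_cdivide[OF DERIV_pow[of "Suc k" u], of "fact (Suc k)"] by simp
    then show "((\<lambda>u. u ^ Suc k / fact (Suc k)) has_vector_derivative u ^ k / fact k) (at u within {0..x})"
      unfolding f by (simp add: has_real_derivative_iff_has_vector_derivative[symmetric] has_field_derivative_at_within)
  qed
  then show ?thesis by simp
qed

lemma Gk_le: assumes x: "x \<ge> 0" shows "Gk k x \<le> x ^ Suc k / fact (Suc k)"
proof (rule has_integral_le[OF Gk_has_integral[OF x] pow_has_integral[OF x]])
  fix u assume "u \<in> {0..x}"
  then have "exp (- u) \<le> 1" "0 \<le> u^k / fact k" by auto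
  then show "exp (- u) * u ^ k / fact k \<le> u ^ k / fact k"
    using mult_right_mono[of "exp (- u)" 1 "u^k / fact k"] by (simp add: field_simps)
qed

lemma Gk_cont: "continuous_on A (Gk k)"
  unfolding Gk_def Sk_def by (intro continuous_intros) auto

lemma Gk_meas[measurable]: "Gk k \<in> borel_measurable borel"
  by (intro borel_measurable_continuous_onI Gk_cont)

lemma ak_meas[measurable]: "ak k \<in> borel_measurable borel"
  unfolding ak_def[abs_def] by measurable

lemma ak_nn: "x \<ge> 0 \<Longrightarrow> ak k x \<ge> 0" by (simp add: ak_def Gk_nn)

lemma ak_le: assumes "0 < x" "x \<le> t" shows "ak k x \<le> t^k / fact k"
proof -
  have "ak k x \<le> (x ^ Suc k / fact (Suc k)) / x"
    unfolding ak_def using Gk_le[of x k] assms by (intro divide_right_mono) auto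
  also have "\<dots> = x^k / fact (Suc k)" using assms by simp
  also have "\<dots> \<le> x^k / fact k" using assms by (intro divide_left_mono) (auto simp: fact_mono)
  also have "\<dots> \<le> t^k / fact k" using assms by (intro divide_right_mono power_mono) auto
  finally show ?thesis .
qed

lemma nn_series_integral:
  fixes c G :: "nat \<Rightarrow> real" and g :: "nat \<Rightarrow> real \<Rightarrow> real" and f :: "real \<Rightarrow> real" and x F :: real
  assumes x: "x \<ge> 0"
    and c0: "\<And>k. c k \<ge> 0" and g0: "\<And>k u. u \<in> {0..x} \<Longrightarrow> g k u \<ge> 0"
    and gm: "\<And>k. g k \<in> borel_measurable borel"
    and sums: "\<And>u. u \<in> {0..x} \<Longrightarrow> (\<lambda>k. c k * g k u) sums f u"
    and gi: "\<And>k. (g k has_integral G k) {0..x}"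
    and fi: "(f has_integral F) {0..x}"
  shows "ennreal F = (\<Sum>k. ennreal (c k * G k))"
proof -
  have f0: "f u \<ge> 0" if u: "u \<in> {0..x}" for u
  proof -
    have "\<And>k. (\<lambda>_. 0::real) k \<le> c k * g k u" using c0 g0[OF u] by simp
    from sums_le[OF this sums_zero sums[OF u]] show ?thesis .
  qed
  have gl[measurable]: "g k \<in> borel_measurable lborel" for k
    using gm[of k] by simp
  have m: "(\<lambda>u. ennreal (c k) * ennreal (indicator {0..x} u * g k u)) \<in> borel_measurable lborel" for k
    by measurable
  have "ennreal F = (\<integral>\<^sup>+u. ennreal (indicator {0..x} u * f u) \<partial>lborel)"
    by (rule nn_integral_has_integral_lebesgue[symmetric, OF f0 fi])
  also have "\<dots> = (\<integral>\<^sup>+u. (\<Sum>k. ennreal (c k) * ennreal (indicator {0..x} u * g k u)) \<partial>lborel)"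
  proof (rule nn_integral_cong)
    fix u
    show "ennreal (indicator {0..x} u * f u) = (\<Sum>k. ennreal (c k) * ennreal (indicator {0..x} u * g k u))"
    proof (cases "u \<in> {0..x}")
      case True
      have "(\<Sum>k. ennreal (c k) * ennreal (indicator {0..x} u * g k u)) = (\<Sum>k. ennreal (c k * g k u))"
        using True by (simp add: ennreal_mult'[OF c0])
      also have "\<dots> = ennreal (\<Sum>k. c k * g k u)"
      proof (rule suminf_ennreal2)
        show "\<And>k. 0 \<le> c k * g k u" using c0 g0[OF True] by simp
        show "summable (\<lambda>k. c k * g k u)" using sums[OF True] by (simp add: sums_iff)
      qed
      also have "\<dots> = ennreal (f u)" using sums[OF True] by (simp add: sums_iff)
      finally show ?thesis using True by simp
    qed simp
  qed
  also have "\<dots> = (\<Sum>k. \<integral>\<^sup>+u. ennreal (c k) * ennreal (indicator {0..x} u * g k u) \<partial>lborel)"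
    by (rule nn_integral_suminf[OF m])
  also have "\<dots> = (\<Sum>k. ennreal (c k) * ennreal (G k))"
  proof (rule suminf_cong)
    fix k
    have m2: "(\<lambda>u. ennreal (indicator {0..x} u * g k u)) \<in> borel_measurable lborel"
      by measurable
    have "(\<integral>\<^sup>+u. ennreal (c k) * ennreal (indicator {0..x} u * g k u) \<partial>lborel)
        = ennreal (c k) * (\<integral>\<^sup>+u. ennreal (indicator {0..x} u * g k u) \<partial>lborel)"
      by (rule nn_integral_cmult[OF m2])
    also have "(\<integral>\<^sup>+u. ennreal (indicator {0..x} u * g k u) \<partial>lborel) = ennreal (G k)"
      by (rule nn_integral_has_integral_lebesgue[OF g0 gi])
    finally show "(\<integral>\<^sup>+u. ennreal (c k) * ennreal (indicator {0..x} u * g k u) \<partial>lborel) = ennreal (c k) * ennreal (G k)" .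
  qed
  also have "\<dots> = (\<Sum>k. ennreal (c k * G k))"
    by (simp add: ennreal_mult'[OF c0])
  finally show ?thesis .
qed

lemma q_expand:
  assumes x: "x > 0"
  shows "ennreal (q_fun j x) = (\<Sum>k. ennreal (cf' j k * ak k x))"
proof -
  have sums: "(\<lambda>k. cf' j k * (exp (- u) * u^k / fact k)) sums p_fun j u" for u
  proof -
    have "(\<lambda>k. exp (- u) * (cf j k * u^k)) sums (exp (- u) * PP j u)"
      unfolding PP_def by (intro sums_mult summable_sums summable_cf)
    moreover have "exp (- u) * (cf j k * u^k) = cf' j k * (exp (- u) * u^k / fact k)" for k
      by (simp add: cf_def cf'_def power2_eq_square field_simps)
    ultimately show ?thesis by (simp add: p_fun_eq)
  qed
  have "ennreal (integral {0..x} (p_fun j)) = (\<Sum>k. ennreal (cf' j k * Gk k x))"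
  proof (rule nn_series_integral[OF _ cf'_nonneg _ _ sums Gk_has_integral])
    show "(p_fun j has_integral integral {0..x} (p_fun j)) {0..x}"
      by (intro integrable_integral integrable_continuous_interval p_cont)
    show "0 \<le> x" using x by simp
    show "0 \<le> exp (- u) * u ^ k / fact k" if "u \<in> {0..x}" for k and u :: real using that by simp
    show "(\<lambda>u::real. exp (- u) * u ^ k / fact k) \<in> borel_measurable borel" for k
      by (rule borel_measurable_continuous_onI) (intro continuous_intros, auto)
  qed (use x in auto)
  then have "ennreal (1 / x) * ennreal (integral {0..x} (p_fun j)) = (\<Sum>k. ennreal (1 / x) * ennreal (cf' j k * Gk k x))"
    by simp
  moreover have "ennreal (1 / x) * ennreal (integral {0..x} (p_fun j)) = ennreal (q_fun j x)"
    using x by (simp add: q_fun_def ennreal_mult'[symmetric])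
  moreover have "ennreal (1 / x) * ennreal (cf' j k * Gk k x) = ennreal (cf' j k * ak k x)" for k
    using x by (simp add: ak_def ennreal_mult'[symmetric])
  ultimately show ?thesis by simp
qed

lemma pow_expand:
  assumes x: "x > 0"
  shows "ennreal (x^m / (m + 1)) = (\<Sum>l. ennreal (fact (m + l) / fact l * ak (m + l) x))"
proof -
  have sums: "(\<lambda>l. fact (m + l) / fact l * (exp (- u) * u^(m + l) / fact (m + l))) sums (u^m / fact m * fact m)" for u :: real
  proof -
    have "(\<lambda>l. exp (- u) * u^m * (u^l /\<^sub>R fact l)) sums (exp (- u) * u^m * exp u)"
      by (intro sums_mult exp_converges)
    moreover have "exp (- u) * u^m * exp u = u^m / fact m * fact m"
    proof -
      have "exp u * exp (- u) = 1" by (rule exp_minus_inverse)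
      moreover have "exp (- u) * u^m * exp u = u^m * (exp u * exp (- u))" by (simp add: algebra_simps)
      ultimately have "exp (- u) * u^m * exp u = u^m" by simp
      then show ?thesis by simp
    qed
    moreover have "exp (- u) * u^m * (u^l /\<^sub>R fact l) = fact (m + l) / fact l * (exp (- u) * u^(m + l) / fact (m + l))" for l
      by (simp add: power_add field_simps)
    ultimately show ?thesis by simp
  qed
  have "ennreal (fact m * (x ^ Suc m / fact (Suc m))) = (\<Sum>l. ennreal (fact (m + l) / fact l * Gk (m + l) x))"
  proof (rule nn_series_integral[where g="\<lambda>l u. exp (- u) * u^(m + l) / fact (m + l)" and f="\<lambda>u. u^m / fact m * fact m", OF _ _ _ _ sums Gk_has_integral])
    show "((\<lambda>u. u ^ m / fact m * fact m) has_integral fact m * (x ^ Suc m / fact (Suc m))) {0..x}"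
      using has_integral_mult_left[OF pow_has_integral[of x m], of "fact m"] x by (simp add: mult.commute)
    show "0 \<le> x" using x by simp
    show "0 \<le> exp (- u) * u ^ (m + l) / fact (m + l)" if "u \<in> {0..x}" for l and u :: real using that by simp
    show "(\<lambda>u::real. exp (- u) * u ^ (m + l) / fact (m + l)) \<in> borel_measurable borel" for l
      by (rule borel_measurable_continuous_onI) (intro continuous_intros, auto)
    show "0 \<le> fact (m + l) / (fact l :: real)" for l by simp
  qed (use x in auto)
  moreover have "fact m * (x ^ Suc m / fact (Suc m)) = x * (x^m / (m + 1))"
    by (simp add: fact_Suc[of m] del: fact_Suc)
  ultimately have e: "ennreal (x * (x^m / (m + 1))) = (\<Sum>l. ennreal (fact (m + l) / fact l * Gk (m + l) x))" by simp
  have "ennreal (x^m / (m + 1)) = ennreal (1 / x) * ennreal (x * (x^m / (m + 1)))"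
    using x by (simp add: ennreal_mult'[symmetric])
  also have "\<dots> = (\<Sum>l. ennreal (1 / x) * ennreal (fact (m + l) / fact l * Gk (m + l) x))"
    by (subst e) (rule ennreal_suminf_cmult[symmetric])
  also have "\<dots> = (\<Sum>l. ennreal (fact (m + l) / fact l * ak (m + l) x))"
    using x by (simp add: ak_def ennreal_mult'[symmetric] mult.commute)
  finally show ?thesis by (simp add: add.commute)
qed

context
  fixes \<gamma> :: "real measure" and t :: real
  assumes t: "t > 0" and pg: "prob_space \<gamma>" and sg: "sets \<gamma> = sets S"
    and lg: "measure \<gamma> {0..<t} = 1"
begin

lemma g_id[measurable]: "(\<lambda>x. x) \<in> \<gamma> \<rightarrow>\<^sub>M borel"
  by (rule meas_sets_trans[OF sg S_id_borel])

lemma g_space: "space \<gamma> = {0..}"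
  using sets_eq_imp_space_eq[OF sg] by (simp add: space_S)

lemma g_AE: "AE x in \<gamma>. 0 \<le> x \<and> x < t"
proof -
  interpret prob_space \<gamma> by (rule pg)
  have "{0..<t} \<in> sets \<gamma>" using sg t by (auto simp: sets_S_iff)
  then have "AE x in \<gamma>. x \<in> {0..<t}" using lg by (intro AE_prob_1) auto
  then show ?thesis by auto
qed

lemma nn_comp: "f \<in> borel_measurable borel \<Longrightarrow> (\<lambda>x. f x) \<in> borel_measurable \<gamma>"
  using measurable_compose[OF g_id] by blast

definition Ag :: "nat \<Rightarrow> ennreal" where
  "Ag k = (\<integral>\<^sup>+x. ennreal (indicator {0<..<t} x * ak k x) \<partial>\<gamma>)"

lemma ind_meas[measurable]: "(\<lambda>x. indicator {0<..<t} x :: real) \<in> borel_measurable \<gamma>"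
  by (rule nn_comp) simp

lemma Ag_le: "Ag k \<le> ennreal (t^k / fact k)"
proof -
  interpret prob_space \<gamma> by (rule pg)
  have "Ag k \<le> (\<integral>\<^sup>+x. ennreal (t^k / fact k) \<partial>\<gamma>)"
    unfolding Ag_def
  proof (rule nn_integral_mono)
    fix x show "ennreal (indicator {0<..<t} x * ak k x) \<le> ennreal (t ^ k / fact k)"
      using ak_le[of x t k] by (auto simp: indicator_def)
  qed
  also have "\<dots> = ennreal (t^k / fact k)" by (simp add: emeasure_space_1)
  finally show ?thesis .
qed

lemma Ag_fin: "Ag k < top"
  by (rule le_less_trans[OF Ag_le ennreal_less_top])

lemma Ag_q: "(\<integral>\<^sup>+x. ennreal (indicator {0<..<t} x * q_fun j x) \<partial>\<gamma>) = (\<Sum>k. ennreal (cf' j k) * Ag k)"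
proof -
  have m: "(\<lambda>x. ennreal (cf' j k) * ennreal (indicator {0<..<t} x * ak k x)) \<in> borel_measurable \<gamma>" for k
    using nn_comp[OF ak_meas[of k]] by measurable
  have "(\<integral>\<^sup>+x. ennreal (indicator {0<..<t} x * q_fun j x) \<partial>\<gamma>)
      = (\<integral>\<^sup>+x. (\<Sum>k. ennreal (cf' j k) * ennreal (indicator {0<..<t} x * ak k x)) \<partial>\<gamma>)"
  proof (rule nn_integral_cong)
    fix x show "ennreal (indicator {0<..<t} x * q_fun j x) = (\<Sum>k. ennreal (cf' j k) * ennreal (indicator {0<..<t} x * ak k x))"
    proof (cases "x \<in> {0<..<t}")
      case True
      then show ?thesis using q_expand[of x j] by (simp add: ennreal_mult'[OF cf'_nonneg])
    qed simp
  qed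
  also have "\<dots> = (\<Sum>k. \<integral>\<^sup>+x. ennreal (cf' j k) * ennreal (indicator {0<..<t} x * ak k x) \<partial>\<gamma>)"
    by (rule nn_integral_suminf[OF m])
  also have "\<dots> = (\<Sum>k. ennreal (cf' j k) * Ag k)"
    unfolding Ag_def using nn_comp[OF ak_meas] by (subst nn_integral_cmult) (auto intro: suminf_cong)
  finally show ?thesis .
qed

lemma Ag_pow: "(\<integral>\<^sup>+x. ennreal (indicator {0<..<t} x * x^m) \<partial>\<gamma>)
    = ennreal (real m + 1) * (\<Sum>l. ennreal (fact (m + l) / fact l) * Ag (m + l))"
proof -
  have m: "(\<lambda>x. ennreal (fact (m + l) / fact l) * ennreal (indicator {0<..<t} x * ak (m + l) x)) \<in> borel_measurable \<gamma>" for l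
    using nn_comp[OF ak_meas[of "m + l"]] by measurable
  have "(\<integral>\<^sup>+x. ennreal (indicator {0<..<t} x * x^m) \<partial>\<gamma>)
      = (\<integral>\<^sup>+x. ennreal (real m + 1) * (\<Sum>l. ennreal (fact (m + l) / fact l) * ennreal (indicator {0<..<t} x * ak (m + l) x)) \<partial>\<gamma>)"
  proof (rule nn_integral_cong)
    fix x show "ennreal (indicator {0<..<t} x * x^m) = ennreal (real m + 1) * (\<Sum>l. ennreal (fact (m + l) / fact l) * ennreal (indicator {0<..<t} x * ak (m + l) x))"
    proof (cases "x \<in> {0<..<t}")
      case True
      then have i: "indicator {0<..<t} x = (1::real)" by simp
      have "ennreal (real m + 1) * (\<Sum>l. ennreal (fact (m + l) / fact l) * ennreal (indicator {0<..<t} x * ak (m + l) x))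
          = ennreal (real m + 1) * (\<Sum>l. ennreal (fact (m + l) / fact l * ak (m + l) x))"
        unfolding i by (simp add: ennreal_mult'[symmetric])
      also have "(\<Sum>l. ennreal (fact (m + l) / fact l * ak (m + l) x)) = ennreal (x^m / (real m + 1))"
        using pow_expand[of x m] True by simp
      also have "ennreal (real m + 1) * ennreal (x^m / (real m + 1)) = ennreal ((real m + 1) * (x^m / (real m + 1)))"
        by (rule ennreal_mult'[symmetric]) simp
      also have "(real m + 1) * (x^m / (real m + 1)) = indicator {0<..<t} x * x^m"
        unfolding i by simp
      finally show ?thesis by simp
    qed simp
  qed
  also have "\<dots> = ennreal (real m + 1) * (\<integral>\<^sup>+x. (\<Sum>l. ennreal (fact (m + l) / fact l) * ennreal (indicator {0<..<t} x * ak (m + l) x)) \<partial>\<gamma>)"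
    by (rule nn_integral_cmult) (use m in measurable)
  also have "(\<integral>\<^sup>+x. (\<Sum>l. ennreal (fact (m + l) / fact l) * ennreal (indicator {0<..<t} x * ak (m + l) x)) \<partial>\<gamma>)
      = (\<Sum>l. \<integral>\<^sup>+x. ennreal (fact (m + l) / fact l) * ennreal (indicator {0<..<t} x * ak (m + l) x) \<partial>\<gamma>)"
    by (rule nn_integral_suminf[OF m])
  also have "\<dots> = (\<Sum>l. ennreal (fact (m + l) / fact l) * Ag (m + l))"
    unfolding Ag_def using nn_comp[OF ak_meas] by (subst nn_integral_cmult) (auto intro: suminf_cong)
  finally show ?thesis .
qed

lemma full_pow: "(\<integral>\<^sup>+x. ennreal (x^m) \<partial>\<gamma>)
    = (\<integral>\<^sup>+x. ennreal (indicator {0<..<t} x * x^m) \<partial>\<gamma>) + ennreal (0^m) * emeasure \<gamma> {0}"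
proof -
  have z: "{0::real} \<in> sets \<gamma>" using sg by (simp add: sets_S_iff)
  have "(\<integral>\<^sup>+x. ennreal (x^m) \<partial>\<gamma>) = (\<integral>\<^sup>+x. ennreal (indicator {0<..<t} x * x^m) + ennreal (0^m) * indicator {0} x \<partial>\<gamma>)"
  proof (rule nn_integral_cong_AE)
    show "AE x in \<gamma>. ennreal (x ^ m) = ennreal (indicator {0<..<t} x * x ^ m) + ennreal (0 ^ m) * indicator {0} x"
      using g_AE by eventually_elim (auto simp: indicator_def)
  qed
  also have "\<dots> = (\<integral>\<^sup>+x. ennreal (indicator {0<..<t} x * x^m) \<partial>\<gamma>) + (\<integral>\<^sup>+x. ennreal (0^m) * indicator {0} x \<partial>\<gamma>)"
    by (rule nn_integral_add) (use z in measurable)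
  also have "(\<integral>\<^sup>+x. ennreal (0^m) * indicator {0} x \<partial>\<gamma>) = ennreal (0^m) * emeasure \<gamma> {0}"
    by (rule nn_integral_cmult_indicator[OF z])
  finally show ?thesis .
qed

lemma char_g: "char (distr \<gamma> borel (\<lambda>x. x)) u
    = (\<Sum>m. ((\<i> * complex_of_real u) ^ m /\<^sub>R fact m) * complex_of_real (enn2real (\<integral>\<^sup>+x. ennreal (x^m) \<partial>\<gamma>)))"
proof -
  interpret prob_space \<gamma> by (rule pg)
  define f where "f m x = (\<i> * complex_of_real (u * x)) ^ m /\<^sub>R fact m" for m x
  have fm[measurable]: "f m \<in> borel_measurable \<gamma>" for m
    unfolding f_def by measurable
  have fb: "AE x in \<gamma>. norm (f m x) \<le> (\<bar>u\<bar> * t) ^ m / fact m" for m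
    using g_AE
  proof eventually_elim
    case (elim x)
    have "norm (f m x) = (\<bar>u\<bar> * \<bar>x\<bar>) ^ m / fact m"
      by (simp add: f_def norm_mult norm_power abs_mult field_simps)
    also have "\<dots> \<le> (\<bar>u\<bar> * t) ^ m / fact m"
      using elim by (intro divide_right_mono power_mono mult_left_mono) auto
    finally show ?case .
  qed
  have fi: "integrable \<gamma> (f m)" for m by (rule integrable_const_bound[OF fb fm])
  have "char (distr \<gamma> borel (\<lambda>x. x)) u = (CLINT x|\<gamma>. iexp (u * x))"
    unfolding char_def by (rule integral_distr) (auto intro: g_id)
  also have "\<dots> = (CLINT x|\<gamma>. (\<Sum>m. f m x))"
  proof -
    have "iexp (u * x) = (\<Sum>m. f m x)" for x
      using exp_converges[of "\<i> * complex_of_real (u * x)"] by (simp add: f_def sums_iff)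
    then show ?thesis by simp
  qed
  also have "\<dots> = (\<Sum>m. CLINT x|\<gamma>. f m x)"
  proof (rule integral_suminf[OF fi])
    show "AE x in \<gamma>. summable (\<lambda>m. norm (f m x))"
      unfolding f_def by (intro AE_I2 summable_norm_exp)
    show "summable (\<lambda>m. \<integral>x. norm (f m x) \<partial>\<gamma>)"
    proof (rule summable_comparison_test')
      show "summable (\<lambda>m. inverse (fact m) * (\<bar>u\<bar> * t) ^ m)" by (rule summable_exp)
      fix m
      have "(\<integral>x. norm (f m x) \<partial>\<gamma>) \<le> (\<bar>u\<bar> * t) ^ m / fact m"
        by (rule integral_le_const) (use fi fb in auto)
      moreover have "0 \<le> (\<integral>x. norm (f m x) \<partial>\<gamma>)" by (rule integral_nonneg_AE) auto
      ultimately show "norm (\<integral>x. norm (f m x) \<partial>\<gamma>) \<le> inverse (fact m) * (\<bar>u\<bar> * t) ^ m"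
        by (simp add: divide_inverse mult.commute)
    qed
  qed
  also have "\<dots> = (\<Sum>m. ((\<i> * complex_of_real u) ^ m /\<^sub>R fact m) * complex_of_real (enn2real (\<integral>\<^sup>+x. ennreal (x^m) \<partial>\<gamma>)))"
  proof (rule suminf_cong)
    fix m
    have eqf: "f m = (\<lambda>x. ((\<i> * complex_of_real u) ^ m /\<^sub>R fact m) * complex_of_real (x^m))"
      by (auto simp: f_def fun_eq_iff power_mult_distrib scaleR_conv_of_real)
    have "(CLINT x|\<gamma>. f m x) = (CLINT x|\<gamma>. ((\<i> * complex_of_real u) ^ m /\<^sub>R fact m) * complex_of_real (x^m))"
      by (simp only: eqf)
    also have "\<dots> = ((\<i> * complex_of_real u) ^ m /\<^sub>R fact m) * (CLINT x|\<gamma>. complex_of_real (x^m))"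
      by (rule integral_mult_right_zero)
    also have "\<dots> = ((\<i> * complex_of_real u) ^ m /\<^sub>R fact m) * complex_of_real (\<integral>x. x^m \<partial>\<gamma>)"
      by (simp only: integral_complex_of_real)
    also have "(\<integral>x. x^m \<partial>\<gamma>) = enn2real (\<integral>\<^sup>+x. ennreal (x^m) \<partial>\<gamma>)"
      by (rule integral_eq_nn_integral) (use g_AE in \<open>auto elim: AE_mp\<close>)
    finally show "(CLINT x|\<gamma>. f m x) = ((\<i> * complex_of_real u) ^ m /\<^sub>R fact m) * complex_of_real (enn2real (\<integral>\<^sup>+x. ennreal (x^m) \<partial>\<gamma>))" .
  qed
  finally show ?thesis .
qed

lemma real_distr_g: "real_distribution (distr \<gamma> borel (\<lambda>x. x))"
proof -
  interpret prob_space \<gamma> by (rule pg)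
  show ?thesis
    by (intro real_distribution.intro prob_space_distr g_id) (simp add: real_distribution_axioms_def)
qed

end

lemma measure_unique:
  fixes \<alpha> \<beta> :: "real measure" and t :: real
  assumes t: "t > 0"
    and pa: "prob_space \<alpha>" and pb: "prob_space \<beta>"
    and sa: "sets \<alpha> = sets S" and sb: "sets \<beta> = sets S"
    and la: "measure \<alpha> {0..<t} = 1" and lb: "measure \<beta> {0..<t} = 1"
    and z: "measure \<alpha> {0} = measure \<beta> {0}"
    and qj: "\<And>j. (\<integral>\<^sup>+x. ennreal (indicator {0<..<t} x * q_fun j x) \<partial>\<alpha>) = (\<integral>\<^sup>+x. ennreal (indicator {0<..<t} x * q_fun j x) \<partial>\<beta>)"
  shows "\<alpha> = \<beta>"
proof -
  define A where "A k = enn2real (Ag \<alpha> t k)" for k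
  define B where "B k = enn2real (Ag \<beta> t k)" for k
  have eA: "Ag \<alpha> t k = ennreal (A k)" for k using Ag_fin[OF t pa sa la] by (simp add: A_def)
  have eB: "Ag \<beta> t k = ennreal (B k)" for k using Ag_fin[OF t pb sb lb] by (simp add: B_def)
  have "A = B"
  proof (rule seq_unique[of t])
    show "0 \<le> t" using t by simp
    show "A k \<ge> 0" "B k \<ge> 0" for k by (simp_all add: A_def B_def)
    show "A k \<le> t^k / fact k" for k
    proof -
      have c: "0 \<le> t^k / fact k" using t by simp
      have "ennreal (A k) \<le> ennreal (t^k / fact k)" using Ag_le[OF t pa sa la, of k] eA[of k] by simp
      then show ?thesis using c by (simp add: ennreal_le_iff)
    qed
    show "B k \<le> t^k / fact k" for k
    proof -
      have c: "0 \<le> t^k / fact k" using t by simp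
      have "ennreal (B k) \<le> ennreal (t^k / fact k)" using Ag_le[OF t pb sb lb, of k] eB[of k] by simp
      then show ?thesis using c by (simp add: ennreal_le_iff)
    qed
    fix j
    show "(\<Sum>k. ennreal (cf' j k * A k)) = (\<Sum>k. ennreal (cf' j k * B k))"
      using qj[of j] Ag_q[OF t pa sa la, of j] Ag_q[OF t pb sb lb, of j]
      by (simp add: eA eB ennreal_mult'[OF cf'_nonneg])
  qed
  then have AgE: "Ag \<alpha> t k = Ag \<beta> t k" for k by (simp add: eA eB)
  have emz: "emeasure \<alpha> {0} = emeasure \<beta> {0}"
  proof -
    interpret PA: prob_space \<alpha> by (rule pa)
    interpret PB: prob_space \<beta> by (rule pb)
    show ?thesis using z by (simp add: PA.emeasure_eq_measure PB.emeasure_eq_measure)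
  qed
  have mom: "(\<integral>\<^sup>+x. ennreal (x^m) \<partial>\<alpha>) = (\<integral>\<^sup>+x. ennreal (x^m) \<partial>\<beta>)" for m
    using full_pow[OF t pa sa la, of m] full_pow[OF t pb sb lb, of m] Ag_pow[OF t pa sa la, of m] Ag_pow[OF t pb sb lb, of m]
    by (simp add: AgE emz)
  have ch: "char (distr \<alpha> borel (\<lambda>x. x)) = char (distr \<beta> borel (\<lambda>x. x))"
    by (rule ext) (simp add: char_g[OF t pa sa la] char_g[OF t pb sb lb] mom)
  have deq: "distr \<alpha> borel (\<lambda>x. x) = distr \<beta> borel (\<lambda>x. x)"
    by (rule Levy_uniqueness[OF real_distr_g[OF t pa sa la] real_distr_g[OF t pb sb lb] ch])
  show ?thesis
  proof (rule measure_eqI)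
    show "sets \<alpha> = sets \<beta>" using sa sb by simp
    fix A assume A: "A \<in> sets \<alpha>"
    then have Ab: "A \<in> sets borel" using sa sets_S_borel by auto
    have "emeasure \<alpha> A = emeasure (distr \<alpha> borel (\<lambda>x. x)) A"
      using A Ab by (subst emeasure_distr) (auto intro: g_id[OF t pa sa la] dest: sets.sets_into_space simp: Int_absorb2)
    also have "\<dots> = emeasure (distr \<beta> borel (\<lambda>x. x)) A" by (simp add: deq)
    also have "\<dots> = emeasure \<beta> A"
      using A Ab sa sb by (subst emeasure_distr) (auto intro: g_id[OF t pb sb lb] dest: sets.sets_into_space simp: Int_absorb2)
    finally show "emeasure \<alpha> A = emeasure \<beta> A" .
  qed
qed

lemma uniqueness:
  assumes MK: "markov_kernel \<nu>" and nu0: "measure (\<nu> 0) {0} = 1"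
    and nult: "\<forall>t>0. measure (\<nu> t) {0..<t} = 1"
    and V: "\<forall>t>0. \<exists>P. chain_law \<nu> t P \<and> (\<forall>j. measure P (visits_eq t j) = q_fun j t)"
  shows "\<forall>t\<ge>0. \<nu> t = mu t"
proof (intro allI impI)
  have K: "\<nu> \<in> S \<rightarrow>\<^sub>M prob_algebra S" using MK by (simp add: markov_kernel_def)
  have nult': "\<And>s. s > 0 \<Longrightarrow> measure (\<nu> s) {0..<s} = 1" using nult by blast
  have Hnu: "Hf \<nu> j s = ennreal (q_fun j s)" if s: "s > 0" for j s
  proof -
    obtain P where CL: "chain_law \<nu> s P" and vis: "\<forall>j. measure P (visits_eq s j) = q_fun j s"
      using V s by blast
    interpret PP: prob_space P using CL by (simp add: chain_law_def)
    have "Hf \<nu> j s = emeasure P (visits_eq s j)" using visits_Hf[OF K nu0 nult' s CL] by simp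
    also have "\<dots> = ennreal (q_fun j s)" using vis by (simp add: PP.emeasure_eq_measure)
    finally show ?thesis .
  qed
  fix t :: real assume t0: "t \<ge> 0"
  show "\<nu> t = mu t"
  proof (cases "t = 0")
    case True
    then show ?thesis using nu_return[OF K nu0] nu_return[OF K_mu mu_0] by simp
  next
    case False
    with t0 have t: "t > 0" by simp
    interpret N: prob_space "\<nu> t" using prob_nu[OF K] t by simp
    show ?thesis
    proof (rule measure_unique[OF t])
      show "prob_space (\<nu> t)" by (rule N.prob_space_axioms)
      show "prob_space (mu t)" by (rule prob_mu)
      show "sets (\<nu> t) = sets S" using sets_nu[OF K] t by simp
      show "sets (mu t) = sets S" by simp
      show "measure (\<nu> t) {0..<t} = 1" using nult t by simp
      show "measure (mu t) {0..<t} = 1" by (rule mu_lt[OF t])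
      have "emeasure (\<nu> t) {0} = ennreal (q_fun 0 t)"
        using Hf_0_form[OF K nu0 nult' t] Hnu[OF t, of 0] by simp
      then have "measure (\<nu> t) {0} = q_fun 0 t"
        using q_nonneg[of t 0] t by (simp add: N.emeasure_eq_measure)
      then show "measure (\<nu> t) {0} = measure (mu t) {0}" using mu_atom[OF t] by simp
      fix j
      have "(\<integral>\<^sup>+x. ennreal (indicator {0<..<t} x * q_fun j x) \<partial>\<nu> t) = Hf \<nu> (Suc j) t"
        using Hf_Suc_form[OF K nu0 nult' t, of j] Hnu by simp
      also have "\<dots> = ennreal (q_fun (Suc j) t)" by (rule Hnu[OF t])
      also have "\<dots> = (\<integral>\<^sup>+x. ennreal (indicator {0<..<t} x * q_fun j x) \<partial>mu t)"
        by (rule mu_int[OF t, symmetric])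
      finally show "(\<integral>\<^sup>+x. ennreal (indicator {0<..<t} x * q_fun j x) \<partial>\<nu> t) = (\<integral>\<^sup>+x. ennreal (indicator {0<..<t} x * q_fun j x) \<partial>mu t)" .
    qed
  qed
qed

theorem theorem3:
  shows "\<exists>\<mu>. (markov_kernel \<mu> \<and>
           measure (\<mu> 0) {0} = 1 \<and>
           (\<forall>t>0. measure (\<mu> t) {0..<t} = 1) \<and>
           (\<forall>t>0. \<exists>P. chain_law \<mu> t P \<and>
                 (\<forall>j. measure P (visits_eq t j) = q_fun j t))) \<and>
         (\<forall>\<nu>. (markov_kernel \<nu> \<and>
           measure (\<nu> 0) {0} = 1 \<and>
           (\<forall>t>0. measure (\<nu> t) {0..<t} = 1) \<and>
           (\<forall>t>0. \<exists>P. chain_law \<nu> t P \<and>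
                 (\<forall>j. measure P (visits_eq t j) = q_fun j t)))
           \<longrightarrow> (\<forall>t\<ge>0. \<nu> t = \<mu> t))"
proof (rule exI[of _ mu], rule conjI)
  show "markov_kernel mu \<and> measure (mu 0) {0} = 1 \<and> (\<forall>t>0. measure (mu t) {0..<t} = 1) \<and>
        (\<forall>t>0. \<exists>P. chain_law mu t P \<and> (\<forall>j. measure P (visits_eq t j) = q_fun j t))"
    by (rule existence)
  show "\<forall>\<nu>. (markov_kernel \<nu> \<and>
           measure (\<nu> 0) {0} = 1 \<and>
           (\<forall>t>0. measure (\<nu> t) {0..<t} = 1) \<and>
           (\<forall>t>0. \<exists>P. chain_law \<nu> t P \<and>
                 (\<forall>j. measure P (visits_eq t j) = q_fun j t)))
           \<longrightarrow> (\<forall>t\<ge>0. \<nu> t = mu t)"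
  proof (rule allI, rule impI)
    fix \<nu> :: "real \<Rightarrow> real measure"
    assume h: "markov_kernel \<nu> \<and> measure (\<nu> 0) {0} = 1 \<and> (\<forall>t>0. measure (\<nu> t) {0..<t} = 1) \<and>
        (\<forall>t>0. \<exists>P. chain_law \<nu> t P \<and> (\<forall>j. measure P (visits_eq t j) = q_fun j t))"
    then show "\<forall>t\<ge>0. \<nu> t = mu t" by (intro uniqueness) auto
  qed
qed

end
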